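(* For every $\varphi\in C(\partial X)$ and every $z\in\overline X$ the integral $\mathcal I'_{(o)}[\varphi](z)=\int_{\partial X}\varphi(\xi)\langle\xi,z\rangle_o\,d\mu_o(\xi)$ converges absolutely, the function $\mathcal I'_{(o)}[\varphi]$ is continuous on $\overline X$, and there is a constant $C$ (independent of $\varphi$) with $\sup_{z\in\overline X}|\mathcal I'_{(o)}[\varphi](z)|\le C\|\varphi\|_\infty$. Thus $\mathcal I'_{(o)}:C(\partial X)\to C(\overline X)$ is a well-defined bounded operator.
   Context: Let $(X,d)$ be a proper geodesic CAT(-1) space, $\partial X$ its Gromov boundary, $\overline X=X\cup\partial X$ with its compact topology. For $x\in X$, $\langle y,z\rangle_x=\frac12(d(y,x)+d(z,x)-d(y,z))$ is the Gromov product, extended continuously to $\overline X$ with values in $[0,+\infty]$. $b_\xi(x,y)=\lim_{t\to\infty}(d(x,\xi_t)-d(y,\xi_t))$ is the Busemann cocycle. Let $G$ be a discrete, non-elementary, convex-cocompact group of isometries of $X$ (acting cocompactly on the union $\mathcal Q(\Lambda(G))$ of geodesics with both endpoints in its limit set $\Lambda(G)=\overline{G.o}\cap\partial X$), $\delta\in(0,\infty)$ its critical exponent and $(\mu_x)_{x\in X}$ its Patterson–Sullivan density: probability measures on $\partial X$ supported on $\Lambda(G)$ with $g_*\mu_x=\mu_{g.x}$ and $\frac{d\mu_x}{d\mu_y}(\xi)=e^{-\delta b_\xi(x,y)}$. Fix $o\in\mathcal Q(\Lambda(G))$. *)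

theory Defs
  imports "HOL-Analysis.Analysis" "HOL-Probability.Probability"
begin

definition geodesic_seg :: "(real \<Rightarrow> 'a::metric_space) \<Rightarrow> 'a \<Rightarrow> 'a \<Rightarrow> bool" where
  "geodesic_seg c x y \<longleftrightarrow> c 0 = x \<and> c (dist x y) = y \<and>
     (\<forall>s\<in>{0..dist x y}. \<forall>t\<in>{0..dist x y}. dist (c s) (c t) = \<bar>s - t\<bar>)"

definition proper_metric :: "'a::metric_space itself \<Rightarrow> bool" where
  "proper_metric _ \<longleftrightarrow> (\<forall>x::'a. \<forall>r. compact (cball x r))"

definition geodesic_metric :: "'a::metric_space itself \<Rightarrow> bool" where
  "geodesic_metric _ \<longleftrightarrow> (\<forall>x y::'a. \<exists>c. geodesic_seg c x y)"

text \<open>For a geodesic triangle with vertex x and sides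
  c1 (from x to y) and c2 (from x to z), with side lengths a = d(y,z), b = d(x,z), c = d(x,y),
  the comparison angle gamma at x in the hyperbolic plane satisfies
  cosh a = cosh b cosh c - sinh b sinh c cos gamma, and the comparison distance D between the points at
  distance s from x on [x,y] and t from x on [x,z] satisfies
  cosh D = cosh s cosh t - sinh s sinh t cos gamma.  The CAT(-1) condition d(c1 s, c2 t) <= D
  (for any two points on two sides of the triangle, which always share a vertex) is written below
  after multiplying by sinh b sinh c > 0.\<close>
definition CAT_minus1 :: "'a::metric_space itself \<Rightarrow> bool" where
  "CAT_minus1 _ \<longleftrightarrow>
    (\<forall>(x::'a) y z c1 c2. geodesic_seg c1 x y \<and> geodesic_seg c2 x z \<and> x \<noteq> y \<and> x \<noteq> z \<longrightarrow>
      (let a = dist y z; b = dist x z; c = dist x y in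
       \<forall>s\<in>{0..c}. \<forall>t\<in>{0..b}.
         cosh (dist (c1 s) (c2 t)) * sinh b * sinh c
           \<le> cosh s * cosh t * sinh b * sinh c
              - sinh s * sinh t * (cosh b * cosh c - cosh a)))"

definition isometry :: "('a::metric_space \<Rightarrow> 'a) \<Rightarrow> bool" where
  "isometry g \<longleftrightarrow> bij g \<and> (\<forall>x y. dist (g x) (g y) = dist x y)"

definition gprod :: "'a::metric_space \<Rightarrow> 'a \<Rightarrow> 'a \<Rightarrow> real" where
  "gprod o' y z = (dist y o' + dist z o' - dist y z) / 2"

text \<open>Points of the boundary are represented by geodesic rays issuing from the base point o
  (normalised to be constant = o on negative times); in a proper CAT(-1) space each point of the
  Gromov boundary is the endpoint of exactly one such ray.\<close>
definition rays :: "'a::metric_space \<Rightarrow> (real \<Rightarrow> 'a) set" where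
  "rays o' = {r. (\<forall>t\<le>0. r t = o') \<and> (\<forall>s\<ge>0. \<forall>t\<ge>0. dist (r s) (r t) = \<bar>s - t\<bar>)}"

definition Xbar :: "'a::metric_space \<Rightarrow> ('a + (real \<Rightarrow> 'a)) set" where
  "Xbar o' = range Inl \<union> Inr ` rays o'"

fun egprod :: "'a::metric_space \<Rightarrow> 'a + (real \<Rightarrow> 'a) \<Rightarrow> 'a + (real \<Rightarrow> 'a) \<Rightarrow> ereal" where
  "egprod o' (Inl y) (Inl z) = ereal (gprod o' y z)"
| "egprod o' (Inr \<xi>) (Inl z) = Lim at_top (\<lambda>t. ereal (gprod o' (\<xi> t) z))"
| "egprod o' (Inl y) (Inr \<eta>) = Lim at_top (\<lambda>t. ereal (gprod o' y (\<eta> t)))"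
| "egprod o' (Inr \<xi>) (Inr \<eta>) = Lim at_top (\<lambda>t. ereal (gprod o' (\<xi> t) (\<eta> t)))"

definition Xbar_top :: "'a::metric_space \<Rightarrow> ('a + (real \<Rightarrow> 'a)) topology" where
  "Xbar_top o' = topology_generated_by
     ({Inl ` ball x r | x r. True} \<union>
      {{z \<in> Xbar o'. egprod o' z (Inr \<xi>) > ereal R} | \<xi> R. \<xi> \<in> rays o'})"

definition bd_top :: "'a::metric_space \<Rightarrow> (real \<Rightarrow> 'a) topology" where
  "bd_top o' = topology_generated_by
     {{\<eta> \<in> rays o'. egprod o' (Inr \<eta>) (Inr \<xi>) > ereal R} | \<xi> R. \<xi> \<in> rays o'}"

definition borel_of :: "'b topology \<Rightarrow> 'b measure" where
  "borel_of T = sigma (topspace T) {U. openin T U}"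

definition busemann :: "(real \<Rightarrow> 'a::metric_space) \<Rightarrow> 'a \<Rightarrow> 'a \<Rightarrow> real" where
  "busemann \<xi> x y = Lim at_top (\<lambda>t. dist x (\<xi> t) - dist y (\<xi> t))"

definition bd_act :: "'a::metric_space \<Rightarrow> ('a \<Rightarrow> 'a) \<Rightarrow> (real \<Rightarrow> 'a) \<Rightarrow> (real \<Rightarrow> 'a)" where
  "bd_act o' g \<xi> = (THE \<eta>. \<eta> \<in> rays o' \<and> (\<exists>B. \<forall>t\<ge>0. dist (\<eta> t) (g (\<xi> t)) \<le> B))"

definition isometry_group :: "('a::metric_space \<Rightarrow> 'a) set \<Rightarrow> bool" where
  "isometry_group G \<longleftrightarrow> (\<forall>g\<in>G. isometry g) \<and> id \<in> G \<and>
     (\<forall>g\<in>G. \<forall>h\<in>G. g \<circ> h \<in> G) \<and> (\<forall>g\<in>G. inv g \<in> G)"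

definition discrete_group :: "('a::metric_space \<Rightarrow> 'a) set \<Rightarrow> bool" where
  "discrete_group G \<longleftrightarrow> (\<forall>x R. finite {g\<in>G. dist x (g x) \<le> R})"

definition limit_set :: "'a::metric_space \<Rightarrow> ('a \<Rightarrow> 'a) set \<Rightarrow> (real \<Rightarrow> 'a) set" where
  "limit_set o' G = {\<xi> \<in> rays o'. Inr \<xi> \<in> (Xbar_top o') closure_of (Inl ` (\<lambda>g. g o') ` G)}"

definition non_elementary :: "'a::metric_space \<Rightarrow> ('a \<Rightarrow> 'a) set \<Rightarrow> bool" where
  "non_elementary o' G \<longleftrightarrow> infinite (limit_set o' G)"

definition geodesic_line :: "(real \<Rightarrow> 'a::metric_space) \<Rightarrow> bool" where
  "geodesic_line c \<longleftrightarrow> (\<forall>s t. dist (c s) (c t) = \<bar>s - t\<bar>)"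

definition hull_Q :: "'a::metric_space \<Rightarrow> ('a \<Rightarrow> 'a) set \<Rightarrow> 'a set" where
  "hull_Q o' G = {c t | c t \<xi> \<eta>. geodesic_line c \<and> \<xi> \<in> limit_set o' G \<and> \<eta> \<in> limit_set o' G \<and>
      limitin (Xbar_top o') (\<lambda>s. Inl (c s)) (Inr \<xi>) at_top \<and>
      limitin (Xbar_top o') (\<lambda>s. Inl (c s)) (Inr \<eta>) at_bot}"

definition convex_cocompact :: "'a::metric_space \<Rightarrow> ('a \<Rightarrow> 'a) set \<Rightarrow> bool" where
  "convex_cocompact o' G \<longleftrightarrow>
     (\<exists>K. compact K \<and> hull_Q o' G \<subseteq> (\<Union>g\<in>G. g ` K))"

definition crit_exp :: "'a::metric_space \<Rightarrow> ('a \<Rightarrow> 'a) set \<Rightarrow> real" where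
  "crit_exp o' G = Inf {s. (\<lambda>g. exp (- s * dist o' (g o'))) summable_on G}"

definition PS_density :: "'a::metric_space \<Rightarrow> ('a \<Rightarrow> 'a) set \<Rightarrow> ('a \<Rightarrow> (real \<Rightarrow> 'a) measure) \<Rightarrow> bool" where
  "PS_density o' G \<mu> \<longleftrightarrow>
     (\<forall>x. prob_space (\<mu> x) \<and> space (\<mu> x) = rays o' \<and> sets (\<mu> x) = sets (borel_of (bd_top o'))
          \<and> limit_set o' G \<in> sets (\<mu> x) \<and> emeasure (\<mu> x) (limit_set o' G) = 1) \<and>
     (\<forall>g\<in>G. \<forall>x. distr (\<mu> x) (\<mu> (g x)) (bd_act o' g) = \<mu> (g x)) \<and>
     (\<forall>x y. \<mu> x = density (\<mu> y) (\<lambda>\<xi>. ennreal (exp (- crit_exp o' G * busemann \<xi> x y))))"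

definition Iprime :: "'a::metric_space \<Rightarrow> ('a \<Rightarrow> (real \<Rightarrow> 'a) measure) \<Rightarrow> ((real \<Rightarrow> 'a) \<Rightarrow> real)
    \<Rightarrow> 'a + (real \<Rightarrow> 'a) \<Rightarrow> real" where
  "Iprime o' \<mu> \<phi> z = (\<integral>\<xi>. \<phi> \<xi> * real_of_ereal (egprod o' (Inr \<xi>) z) \<partial>\<mu> o')"

end

theory Submission
  imports Defs "HOL-Library.Diagonal_Subsequence"
begin

lemma ray_dist:
  assumes "r \<in> rays o'" "0 \<le> s" "0 \<le> t"
  shows "dist (r s) (r t) = \<bar>s - t\<bar>"
  using assms unfolding rays_def by auto

lemma ray_zero: "r \<in> rays o' \<Longrightarrow> r 0 = o'"
  unfolding rays_def by auto

lemma ray_dist0: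
  assumes "r \<in> rays o'" "0 \<le> t"
  shows "dist o' (r t) = t" "dist (r t) o' = t"
  using ray_dist[OF assms(1) order.refl assms(2)] ray_zero[OF assms(1)] assms(2)
  by (auto simp: dist_commute)

lemma ray_seg:
  assumes "r \<in> rays o'" "0 \<le> t"
  shows "geodesic_seg r o' (r t)"
  using assms ray_dist[OF assms(1)] ray_zero[OF assms(1)] ray_dist0[OF assms]
  unfolding geodesic_seg_def by auto

lemma gprod_sym: "gprod o' y z = gprod o' z y"
  unfolding gprod_def by (simp add: dist_commute add.commute)

lemma gprod_nonneg: "0 \<le> gprod o' y z"
  unfolding gprod_def using dist_triangle[of y z o'] by (simp add: dist_commute)

lemma gprod_le1: "gprod o' y z \<le> dist y o'"
  unfolding gprod_def using dist_triangle[of z o' y] by (simp add: dist_commute)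

lemma gprod_le2: "gprod o' y z \<le> dist z o'"
  unfolding gprod_def using dist_triangle[of y o' z] by (simp add: dist_commute)

lemma gprod_lip: "\<bar>gprod o' y z - gprod o' y' z\<bar> \<le> dist y y'"
proof -
  have "dist y o' \<le> dist y y' + dist y' o'" "dist y' o' \<le> dist y y' + dist y o'"
    "dist y z \<le> dist y y' + dist y' z" "dist y' z \<le> dist y y' + dist y z"
    using dist_triangle[of y o' y'] dist_triangle[of y' o' y]
    dist_triangle[of y z y'] dist_triangle[of y' z y] by (auto simp: dist_commute)
  then show ?thesis unfolding gprod_def abs_le_iff by (intro conjI; simp add: field_simps)
qed

lemma gprod_lip2: "\<bar>gprod o' y z - gprod o' y z'\<bar> \<le> dist z z'"
  using gprod_lip[of o' z y z'] by (simp add: gprod_sym)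

lemma geo_dist0:
  assumes "geodesic_seg c o' p" "0 \<le> s" "s \<le> dist o' p"
  shows "dist (c s) o' = s"
  using assms unfolding geodesic_seg_def
  by (metis abs_of_nonneg atLeastAtMost_iff diff_zero dist_commute order_refl zero_le_dist)

lemma geo_dist:
  assumes "geodesic_seg c x p" "0 \<le> s" "s \<le> dist x p" "0 \<le> t" "t \<le> dist x p"
  shows "dist (c s) (c t) = \<bar>s - t\<bar>"
  using assms unfolding geodesic_seg_def by auto

lemma gprod_mono_geo:
  assumes "geodesic_seg c o' p" "0 \<le> s" "s \<le> t" "t \<le> dist o' p"
  shows "gprod o' (c s) y \<le> gprod o' (c t) y"
proof -
  have 1: "dist (c s) o' = s" "dist (c t) o' = t"
    using geo_dist0[OF assms(1)] assms by auto
  have "dist (c s) (c t) = t - s" using geo_dist[OF assms(1), of s t] assms by auto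
  then show ?thesis unfolding gprod_def using 1 dist_triangle[of "c t" y "c s"]
    by (simp add: dist_commute)
qed

lemma gprod_mono_ray:
  assumes "r \<in> rays o'" "0 \<le> s" "s \<le> t"
  shows "gprod o' (r s) y \<le> gprod o' (r t) y"
  using gprod_mono_geo[OF ray_seg[OF assms(1), of t]] assms ray_dist0[OF assms(1), of t] by auto

lemma mono_Lim_SUP:
  fixes f :: "real \<Rightarrow> ereal"
  assumes mono: "\<And>s t. 0 \<le> s \<Longrightarrow> s \<le> t \<Longrightarrow> f s \<le> f t"
  shows "(f \<longlongrightarrow> (SUP n::nat. f (real n))) at_top"
proof (rule order_tendstoI)
  fix a assume "a < (SUP n::nat. f (real n))"
  then obtain n :: nat where "a < f (real n)" by (auto simp: less_SUP_iff)
  then show "\<forall>\<^sub>F x in at_top. a < f x"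
    using mono[of "real n"] by (auto simp: eventually_at_top_linorder intro!: exI[of _ "real n"]
      elim: less_le_trans)
next
  fix a assume a: "(SUP n::nat. f (real n)) < a"
  have "f t < a" if "t \<ge> 0" for t
  proof -
    have "f t \<le> f (real (nat \<lceil>t\<rceil>))" using mono[of t "real (nat \<lceil>t\<rceil>)"] that
      by (simp add: real_nat_ceiling_ge)
    also have "\<dots> \<le> (SUP n::nat. f (real n))" by (rule SUP_upper) auto
    finally show ?thesis using a by simp
  qed
  then show "\<forall>\<^sub>F x in at_top. f x < a" by (auto simp: eventually_at_top_linorder)
qed

lemma mono_Lim_SUP':
  fixes f :: "real \<Rightarrow> ereal"
  assumes mo: "\<And>s t. 0 \<le> s \<Longrightarrow> s \<le> t \<Longrightarrow> f s \<le> f t"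
  shows "Lim at_top f = (SUP n::nat. f (real n))"
  using mono_Lim_SUP[of f, OF mo] by (simp add: tendsto_Lim)

lemma egprod_rl:
  assumes "\<xi> \<in> rays o'"
  shows "egprod o' (Inr \<xi>) (Inl w) = (SUP n::nat. ereal (gprod o' (\<xi> (real n)) w))"
  by (simp, rule mono_Lim_SUP') (use gprod_mono_ray[OF assms] in auto)

lemma egprod_lr:
  assumes "\<xi> \<in> rays o'"
  shows "egprod o' (Inl w) (Inr \<xi>) = (SUP n::nat. ereal (gprod o' (\<xi> (real n)) w))"
proof -
  have "egprod o' (Inl w) (Inr \<xi>) = egprod o' (Inr \<xi>) (Inl w)"
    by (simp add: gprod_sym[of o' w])
  then show ?thesis using egprod_rl[OF assms] by simp
qed

lemma gprod_mono_rr: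
  assumes "\<xi> \<in> rays o'" "\<eta> \<in> rays o'" "0 \<le> s" "s \<le> t"
  shows "gprod o' (\<xi> s) (\<eta> s) \<le> gprod o' (\<xi> t) (\<eta> t)"
proof -
  have "gprod o' (\<xi> s) (\<eta> s) \<le> gprod o' (\<xi> t) (\<eta> s)" using gprod_mono_ray[OF assms(1)] assms by auto
  also have "\<dots> = gprod o' (\<eta> s) (\<xi> t)" by (rule gprod_sym)
  also have "\<dots> \<le> gprod o' (\<eta> t) (\<xi> t)" using gprod_mono_ray[OF assms(2)] assms by auto
  finally show ?thesis by (simp add: gprod_sym)
qed

lemma egprod_rr:
  assumes "\<xi> \<in> rays o'" "\<eta> \<in> rays o'"
  shows "egprod o' (Inr \<xi>) (Inr \<eta>) = (SUP n::nat. ereal (gprod o' (\<xi> (real n)) (\<eta> (real n))))"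
  by (simp, rule mono_Lim_SUP') (use gprod_mono_rr[OF assms] in auto)

lemma egprod_rr_sym:
  assumes "\<xi> \<in> rays o'" "\<eta> \<in> rays o'"
  shows "egprod o' (Inr \<xi>) (Inr \<eta>) = egprod o' (Inr \<eta>) (Inr \<xi>)"
  using egprod_rr[OF assms] egprod_rr[OF assms(2,1)] by (simp add: gprod_sym)

lemma egprod_rl_ge:
  assumes "\<xi> \<in> rays o'" "0 \<le> t"
  shows "ereal (gprod o' (\<xi> t) w) \<le> egprod o' (Inr \<xi>) (Inl w)"
proof -
  have "gprod o' (\<xi> t) w \<le> gprod o' (\<xi> (real (nat \<lceil>t\<rceil>))) w"
    using gprod_mono_ray[OF assms(1)] assms(2) by (simp add: real_nat_ceiling_ge)
  also have "ereal \<dots> \<le> (SUP n::nat. ereal (gprod o' (\<xi> (real n)) w))" by (rule SUP_upper) auto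
  finally show ?thesis using egprod_rl[OF assms(1)] by simp
qed

lemma egprod_rr_ge:
  assumes "\<xi> \<in> rays o'" "\<eta> \<in> rays o'" "0 \<le> t"
  shows "ereal (gprod o' (\<xi> t) (\<eta> t)) \<le> egprod o' (Inr \<xi>) (Inr \<eta>)"
proof -
  have "gprod o' (\<xi> t) (\<eta> t) \<le> gprod o' (\<xi> (real (nat \<lceil>t\<rceil>))) (\<eta> (real (nat \<lceil>t\<rceil>)))"
    using gprod_mono_rr[OF assms(1,2)] assms(3) by (simp add: real_nat_ceiling_ge)
  also have "ereal \<dots> \<le> (SUP n::nat. ereal (gprod o' (\<xi> (real n)) (\<eta> (real n))))" by (rule SUP_upper) auto
  finally show ?thesis using egprod_rr[OF assms(1,2)] by simp
qed

lemma egprod_rl_bounds: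
  assumes "\<xi> \<in> rays o'"
  shows "0 \<le> egprod o' (Inr \<xi>) (Inl w)" "egprod o' (Inr \<xi>) (Inl w) \<le> ereal (dist w o')"
proof -
  show "0 \<le> egprod o' (Inr \<xi>) (Inl w)"
    by (rule order_trans[OF _ egprod_rl_ge[OF assms order.refl, of w]]) (simp add: gprod_nonneg)
  show "egprod o' (Inr \<xi>) (Inl w) \<le> ereal (dist w o')"
  unfolding egprod_rl[OF assms] using gprod_le2 by (auto intro!: SUP_least)
qed

lemma egprod_rr_nonneg:
  assumes "\<xi> \<in> rays o'" "\<eta> \<in> rays o'"
  shows "0 \<le> egprod o' (Inr \<xi>) (Inr \<eta>)"
  by (rule order_trans[OF _ egprod_rr_ge[OF assms order.refl]]) (simp add: gprod_nonneg)


lemma exp_neg_eq: "exp (- x) = 1 / exp (x::real)"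
  by (simp add: exp_minus field_simps)

lemma hb_cosh_le: "0 \<le> x \<Longrightarrow> cosh (x::real) \<le> exp x"
  unfolding cosh_field_def exp_neg_eq
proof -
  assume "0 \<le> x"
  then have "1 \<le> exp x" by simp
  then have "1 / exp x \<le> exp x" by (smt (verit) divide_le_eq_1_pos exp_gt_zero)
  then show "(exp x + 1 / exp x) / 2 \<le> exp x" by simp
qed

lemma hb_sinh_le: "sinh (x::real) \<le> exp x / 2"
  unfolding sinh_field_def by simp

lemma hb_sinh_ge: "1 \<le> x \<Longrightarrow> exp x / 4 \<le> sinh (x::real)"
proof -
  assume x: "1 \<le> x"
  have "exp 1 \<ge> (2::real)" using exp_ge_add_one_self[of 1] by simp
  then have "exp x \<ge> 2" using x by (smt (verit) exp_le_cancel_iff)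
  then have "exp (-x) \<le> 1/2" by (simp add: exp_minus field_simps)
  moreover have "exp (-x) * exp x = 1" by (simp add: exp_minus)
  ultimately have "exp (-x) \<le> exp x / 2" using \<open>exp x \<ge> 2\<close> by linarith
  then show ?thesis unfolding sinh_field_def by simp
qed

lemma hb_exp_le_2cosh: "exp (x::real) \<le> 2 * cosh x"
  unfolding cosh_field_def by simp

lemma hb_2cosh_le: "0 \<le> x \<Longrightarrow> 2 * cosh (x::real) - 1 \<le> exp x"
proof -
  assume "0 \<le> x"
  then have "exp (-x) \<le> 1" by simp
  then show ?thesis unfolding cosh_field_def by (simp add: field_simps)
qed

lemma hb_sinh_eq: "sinh (x::real) = exp x * (1 - exp (-2*x)) / 2"
proof -
  have "exp x * exp (-2*x) = exp (-x)" by (simp add: mult_exp_exp)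
  then show ?thesis unfolding sinh_field_def
    by (simp add: right_diff_distrib)
qed

lemma hb_cosh_eq: "2 * (cosh (d::real) - 1) = exp d * (1 - exp (-d))^2"
  unfolding cosh_field_def exp_minus by (simp add: field_simps power2_eq_square)

lemma exp4_ge8: "8 \<le> exp (4::real)"
proof -
  have "3 \<le> exp (2::real)" using exp_ge_add_one_self[of 2] by simp
  then have "3 * 3 \<le> exp (2::real) * exp 2" by (intro mult_mono) auto
  also have "\<dots> = exp 4" by (simp add: mult_exp_exp)
  finally show ?thesis by simp
qed

lemma cat_ineq:
  fixes c1 c2 :: "real \<Rightarrow> 'a::metric_space"
  assumes "CAT_minus1 TYPE('a)" "geodesic_seg c1 x y" "geodesic_seg c2 x z" "x \<noteq> y" "x \<noteq> z"
    "0 \<le> s" "s \<le> dist x y" "0 \<le> t" "t \<le> dist x z"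
  shows "cosh (dist (c1 s) (c2 t)) * sinh (dist x z) * sinh (dist x y)
           \<le> cosh s * cosh t * sinh (dist x z) * sinh (dist x y)
              - sinh s * sinh t * (cosh (dist x z) * cosh (dist x y) - cosh (dist y z))"
proof -
  have "\<forall>s\<in>{0..dist x y}. \<forall>t\<in>{0..dist x z}.
        cosh (dist (c1 s) (c2 t)) * sinh (dist x z) * sinh (dist x y)
           \<le> cosh s * cosh t * sinh (dist x z) * sinh (dist x y)
              - sinh s * sinh t * (cosh (dist x z) * cosh (dist x y) - cosh (dist y z))"
    using assms(1) assms(2-5) unfolding CAT_minus1_def Let_def by blast
  then show ?thesis using assms(6-9) by auto
qed

lemma geo_end: "geodesic_seg c x y \<Longrightarrow> c (dist x y) = y" "geodesic_seg c x y \<Longrightarrow> c 0 = x"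
  unfolding geodesic_seg_def by auto

lemma geo_rev:
  assumes "geodesic_seg c x y"
  shows "geodesic_seg (\<lambda>s. c (dist x y - s)) y x"
  using assms unfolding geodesic_seg_def
  by (auto simp: dist_commute abs_minus_commute)

lemma hyp_H:
  fixes o' p q :: "'a::metric_space" and c :: "real \<Rightarrow> 'a"
  assumes cat: "CAT_minus1 TYPE('a)" and geo: "geodesic_metric TYPE('a)"
    and c: "geodesic_seg c o' p" and r: "0 \<le> r" "r \<le> dist o' p"
  shows "min (gprod o' q p) r - 2 \<le> gprod o' q (c r)"
proof -
  define A where "A = dist o' p"
  have cr: "dist (c r) o' = r" using geo_dist0[OF c r] .
  have cA: "c A = p" using geo_end[OF c] A_def by simp
  have dpcr: "dist p (c r) = A - r"
    using geo_dist[OF c, of A r] r A_def cA by auto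
  show ?thesis
  proof (cases "A < 1")
    case True
    then show ?thesis using gprod_nonneg[of o' q "c r"] r A_def by (simp add: min_def)
  next
    case Age: False
    show ?thesis
    proof (cases "q = p")
      case True
      have "gprod o' q (c r) = r" unfolding True gprod_def using cr dpcr A_def
        by (simp add: dist_commute field_simps)
      then show ?thesis by simp
    next
      case qp: False
      obtain c2 where c2: "geodesic_seg c2 p q" using geo unfolding geodesic_metric_def by blast
      define c1 where "c1 = (\<lambda>s. c (A - s))"
      have c1: "geodesic_seg c1 p o'" using geo_rev[OF c] unfolding c1_def A_def .
      have po: "p \<noteq> o'" using Age A_def by auto
      define B where "B = dist o' q"
      define C where "C = dist p q"
      define d where "d = dist (c r) q"
      have dpo: "dist p o' = A" using A_def by (simp add: dist_commute)
      have c1r: "c1 (A - r) = c r" unfolding c1_def by simp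
      have c2C: "c2 C = q" using geo_end[OF c2] C_def by simp
      have I: "cosh d * sinh C * sinh A \<le> cosh (A - r) * cosh C * sinh C * sinh A
              - sinh (A - r) * sinh C * (cosh C * cosh A - cosh B)"
        using cat_ineq[OF cat c1 c2 po qp[symmetric], of "A - r" C] r dpo c1r c2C
        unfolding B_def C_def d_def A_def by (simp add: dist_commute)
      have Cpos: "0 < C" using qp C_def by (simp add: dist_commute)
      have "sinh C * (cosh d * sinh A) \<le> sinh C * (cosh (A - r) * cosh C * sinh A
              - sinh (A - r) * (cosh C * cosh A - cosh B))"
        using I by (simp add: algebra_simps)
      then have "cosh d * sinh A \<le> cosh (A - r) * cosh C * sinh A
              - sinh (A - r) * (cosh C * cosh A - cosh B)"
        using Cpos by (simp add: mult_le_cancel_left_pos)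
      also have "\<dots> = cosh C * (sinh A * cosh (A - r) - cosh A * sinh (A - r)) + sinh (A - r) * cosh B"
        by (simp add: algebra_simps)
      also have "sinh A * cosh (A - r) - cosh A * sinh (A - r) = sinh r"
        using sinh_diff[of A "A - r"] by simp
      finally have E0: "cosh d * sinh A \<le> cosh C * sinh r + sinh (A - r) * cosh B" .
      have A1: "1 \<le> A" using Age by simp
      have ArA: "0 \<le> A - r" using r A_def by simp
      have "exp d * (exp A / 4) \<le> (2 * cosh d) * sinh A"
        using hb_exp_le_2cosh[of d] hb_sinh_ge[OF A1] by (intro mult_mono) auto
      also have "\<dots> \<le> 2 * (cosh C * sinh r + sinh (A - r) * cosh B)" using E0 by simp
      also have "\<dots> \<le> 2 * (exp C * (exp r / 2) + (exp (A - r) / 2) * exp B)"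
        using hb_cosh_le[of C] hb_sinh_le[of r] hb_sinh_le[of "A - r"] hb_cosh_le[of B] Cpos r ArA
        by (intro mult_left_mono add_mono mult_mono) (auto simp: B_def)
      also have "\<dots> = exp (C + r) + exp (A - r + B)" by (simp add: mult_exp_exp)
      finally have E1: "exp (d + A) \<le> 4 * exp (C + r) + 4 * exp (A - r + B)"
        by (simp add: mult_exp_exp field_simps)
      define m where "m = min (gprod o' q p) r"
      have gqp: "gprod o' q p = (B + A - C) / 2"
        unfolding gprod_def B_def A_def C_def by (simp add: dist_commute)
      have m1: "C + r \<le> A + B + r - 2 * m" using gqp unfolding m_def by (simp add: min_def field_simps)
      have m2: "A - r + B \<le> A + B + r - 2 * m" unfolding m_def by (simp add: min_def field_simps)
      have "exp (d + A) \<le> 8 * exp (A + B + r - 2 * m)"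
        using E1 m1 m2 by (smt (verit) exp_le_cancel_iff)
      also have "\<dots> \<le> exp 4 * exp (A + B + r - 2 * m)" using exp4_ge8 by simp
      also have "\<dots> = exp (4 + A + B + r - 2 * m)" by (simp add: mult_exp_exp)
      finally have "d + A \<le> 4 + A + B + r - 2 * m" by simp
      then have "d \<le> 4 + B + r - 2 * m" by simp
      moreover have "gprod o' q (c r) = (B + r - d) / 2"
        unfolding gprod_def B_def d_def using cr by (simp add: dist_commute)
      ultimately show ?thesis unfolding m_def by (simp add: field_simps)
    qed
  qed
qed

lemma cmp_o:
  fixes a b :: "real \<Rightarrow> 'a::metric_space"
  assumes cat: "CAT_minus1 TYPE('a)" and a: "geodesic_seg a o' pa" and b: "geodesic_seg b o' pb"
    and "pa \<noteq> o'" "pb \<noteq> o'" "0 \<le> T" "T \<le> dist o' pa" "T \<le> dist o' pb"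
  shows "cosh (dist (a T) (b T)) * sinh (dist o' pb) * sinh (dist o' pa)
     \<le> cosh T * cosh T * sinh (dist o' pb) * sinh (dist o' pa)
        - sinh T * sinh T * (cosh (dist o' pb) * cosh (dist o' pa) - cosh (dist pa pb))"
  using cat_ineq[OF cat a b, of T T] assms by auto

lemma cmp_D:
  fixes a b :: "real \<Rightarrow> 'a::metric_space"
  assumes cat: "CAT_minus1 TYPE('a)" and a: "geodesic_seg a o' pa" and b: "geodesic_seg b o' pb"
    and A1: "1 \<le> dist o' pa" and B1: "1 \<le> dist o' pb" and T: "0 \<le> T" "T \<le> dist o' pa" "T \<le> dist o' pb"
  shows "cosh (dist (a T) (b T)) - 1 \<le> 16 * (sinh T)^2 * exp (-2 * gprod o' pa pb)"
proof -
  define A where "A = dist o' pa"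
  define B where "B = dist o' pb"
  define d where "d = dist (a T) (b T)"
  define a' where "a' = dist pa pb"
  have "pa \<noteq> o'" "pb \<noteq> o'" using A1 B1 by auto
  from cmp_o[OF cat a b this T] have I:
    "cosh d * sinh B * sinh A \<le> cosh T * cosh T * sinh B * sinh A - sinh T * sinh T * (cosh B * cosh A - cosh a')"
    unfolding A_def B_def d_def a'_def .
  have ct: "cosh T * cosh T = 1 + sinh T * sinh T" using cosh_square_eq[of T] by (simp add: power2_eq_square)
  have "(cosh d - 1) * (sinh B * sinh A) \<le> sinh T * sinh T * (cosh a' - (cosh B * cosh A - sinh B * sinh A))"
    using I ct by (simp add: algebra_simps)
  also have "cosh B * cosh A - sinh B * sinh A = cosh (B - A)" by (simp add: cosh_diff)
  also have "sinh T * sinh T * (cosh a' - cosh (B - A)) \<le> sinh T * sinh T * exp a'"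
  proof (intro mult_left_mono)
    show "cosh a' - cosh (B - A) \<le> exp a'"
      using hb_cosh_le[of a'] cosh_real_nonneg[of "B - A"] zero_le_dist[of pa pb] unfolding a'_def by linarith
  qed auto
  finally have J: "(cosh d - 1) * (sinh B * sinh A) \<le> sinh T * sinh T * exp a'" .
  have "(cosh d - 1) * (exp B / 4 * (exp A / 4)) \<le> (cosh d - 1) * (sinh B * sinh A)"
    using hb_sinh_ge[of A] hb_sinh_ge[of B] A1 B1 cosh_real_ge_1[of d]
    by (intro mult_left_mono mult_mono) (auto simp: A_def B_def)
  also note J
  finally have "(cosh d - 1) * exp (A + B) \<le> 16 * (sinh T * sinh T * exp a')"
    by (simp add: mult_exp_exp field_simps)
  then have "cosh d - 1 \<le> 16 * (sinh T * sinh T * exp a') / exp (A + B)"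
    by (rule pos_le_divide_eq[THEN iffD2, rotated]) simp
  also have "\<dots> = 16 * (sinh T * sinh T) * exp (a' - (A + B))"
    by (simp add: exp_diff)
  finally have "cosh d - 1 \<le> 16 * (sinh T * sinh T) * exp (a' - (A + B))" .
  moreover have "a' - (A + B) = -2 * gprod o' pa pb"
    unfolding gprod_def A_def B_def a'_def by (simp add: dist_commute field_simps)
  ultimately show ?thesis unfolding d_def by (simp add: power2_eq_square)
qed

lemma aux_M: fixes ed u eB v eA w eT ea :: real
  shows "(ed * u) * (eB * v / 2) * (eA * w / 2) \<le> eT / 2 * (eT / 2) * ea \<Longrightarrow> ed * eB * eA * (u * v * w) \<le> eT * eT * ea"
  by (simp add: field_simps)

lemma cmp_E:
  fixes a b :: "real \<Rightarrow> 'a::metric_space"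
  assumes cat: "CAT_minus1 TYPE('a)" and a: "geodesic_seg a o' pa" and b: "geodesic_seg b o' pb"
    and T: "0 < T" "T \<le> dist o' pa" "T \<le> dist o' pb"
  shows "exp (-2 * gprod o' (a T) (b T)) * (1 - exp (- dist (a T) (b T)))^2
           * (1 - exp (-2 * dist o' pa)) * (1 - exp (-2 * dist o' pb))
         \<le> exp (-2 * gprod o' pa pb)"
proof -
  define A where "A = dist o' pa"
  define B where "B = dist o' pb"
  define d where "d = dist (a T) (b T)"
  define a' where "a' = dist pa pb"
  have "pa \<noteq> o'" "pb \<noteq> o'" using T by auto
  from cmp_o[OF cat a b this] T have I:
    "cosh d * sinh B * sinh A \<le> cosh T * cosh T * sinh B * sinh A - sinh T * sinh T * (cosh B * cosh A - cosh a')"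
    unfolding A_def B_def d_def a'_def by auto
  have ct: "cosh T * cosh T = 1 + sinh T * sinh T" using cosh_square_eq[of T] by (simp add: power2_eq_square)
  have "sinh T * sinh T * cosh a' \<ge> sinh T * sinh T * (cosh B * cosh A - sinh B * sinh A) + (cosh d - 1) * (sinh B * sinh A)"
    using I ct by (simp add: algebra_simps)
  also have "cosh B * cosh A - sinh B * sinh A = cosh (B - A)" by (simp add: cosh_diff)
  finally have K: "sinh T * sinh T * cosh a' \<ge> sinh T * sinh T * cosh (B - A) + (cosh d - 1) * (sinh B * sinh A)" .
  have "sinh T * sinh T * exp a' \<ge> sinh T * sinh T * (2 * cosh a' - 1)"
    using hb_2cosh_le[of a'] by (intro mult_left_mono) (auto simp: a'_def)
  moreover have "sinh T * sinh T * (2 * cosh a' - 1) \<ge> 2 * ((cosh d - 1) * (sinh B * sinh A))"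
  proof -
    have "sinh T * sinh T * (2 * cosh (B - A) - 1) \<ge> 0"
      using cosh_real_ge_1[of "B - A"] by simp
    then show ?thesis using K by (simp add: algebra_simps)
  qed
  ultimately have L0: "sinh T * sinh T * exp a' \<ge> 2 * ((cosh d - 1) * (sinh B * sinh A))" by linarith
  then have L: "sinh T * sinh T * exp a' \<ge> (2 * (cosh d - 1)) * sinh B * sinh A" by (simp only: mult.assoc)
  have sT: "sinh T * sinh T \<le> exp T / 2 * (exp T / 2)"
    using hb_sinh_le[of T] T by (intro mult_mono) auto
  have "(exp d * (1 - exp (-d))^2) * (exp B * (1 - exp (-2*B)) / 2) * (exp A * (1 - exp (-2*A)) / 2)
      \<le> sinh T * sinh T * exp a'"
    using L unfolding hb_cosh_eq hb_sinh_eq[of A] hb_sinh_eq[of B] .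
  also have "\<dots> \<le> exp T / 2 * (exp T / 2) * exp a'" using sT by (intro mult_right_mono) auto
  finally have M0: "(exp d * (1 - exp (-d))^2) * (exp B * (1 - exp (-2*B)) / 2) * (exp A * (1 - exp (-2*A)) / 2)
     \<le> exp T / 2 * (exp T / 2) * exp a'" .
  define u where "u = (1 - exp (-d))^2"
  define v where "v = 1 - exp (-2*B)"
  define w where "w = 1 - exp (-2*A)"
  have e1: "exp (d + B + A) = exp d * exp B * exp A" by (simp add: exp_add)
  have "exp (2 * T + a') = exp (T + T + a')" by (simp only: mult_2)
  also have "\<dots> = exp T * exp T * exp a'" by (simp only: exp_add)
  finally have e2: "exp (2 * T + a') = exp T * exp T * exp a'" .
  have M: "exp (d + B + A) * (u * v * w) \<le> exp (2 * T + a')"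
    using aux_M[OF M0[unfolded u_def[symmetric] v_def[symmetric] w_def[symmetric]]] unfolding e1 e2 .
  have "exp (d - 2 * T) = exp (d + B + A) * exp (- (2 * T + B + A))"
    by (simp add: mult_exp_exp)
  then have "exp (d - 2 * T) * (u * v * w)
      = exp (d + B + A) * (u * v * w) * exp (- (2 * T + B + A))"
    by (simp only: mult_ac)
  also have "\<dots> \<le> exp (2 * T + a') * exp (- (2 * T + B + A))"
    using M by (intro mult_right_mono) auto
  also have "\<dots> = exp (a' - A - B)" by (simp add: mult_exp_exp)
  finally have N: "exp (d - 2 * T) * (u * v * w) \<le> exp (a' - A - B)" .
  have aT: "dist (a T) o' = T" using geo_dist0[OF a] T by auto
  have bT: "dist (b T) o' = T" using geo_dist0[OF b] T by auto
  have g1: "-2 * gprod o' (a T) (b T) = d - 2 * T" unfolding gprod_def d_def using aT bT by simp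
  have g2: "-2 * gprod o' pa pb = a' - A - B" unfolding gprod_def A_def B_def a'_def by (simp add: dist_commute)
  have "exp (d - 2 * T) * u * w * v \<le> exp (a' - A - B)" using N by (simp only: mult_ac)
  then show ?thesis unfolding g1 g2 u_def v_def w_def d_def A_def B_def .
qed


definition gp :: "'a::metric_space \<Rightarrow> 'a \<Rightarrow> real \<Rightarrow> 'a" where
  "gp o' w = (SOME c. geodesic_seg c o' w)"

lemma gp: "geodesic_metric TYPE('a) \<Longrightarrow> geodesic_seg (gp o' w) o' (w::'a::metric_space)"
  unfolding gp_def geodesic_metric_def by (metis someI_ex)

lemma ereal_SUP_geI:
  fixes f :: "nat \<Rightarrow> ereal"
  assumes "\<And>b. b < a \<Longrightarrow> \<exists>n. ereal b < f n"
  shows "ereal a \<le> (SUP n. f n)"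
proof (rule dense_le)
  fix y assume y: "y < ereal a"
  show "y \<le> (SUP n. f n)"
  proof (cases y)
    case (real b)
    then obtain n where "ereal b < f n" using assms y by auto
    also have "f n \<le> (SUP n. f n)" by (rule SUP_upper) auto
    finally show ?thesis using real by simp
  qed (use y in auto)
qed

lemma tail_incl_l:
  fixes o' w :: "'a::metric_space"
  assumes cat: "CAT_minus1 TYPE('a)" and geo: "geodesic_metric TYPE('a)"
    and \<xi>: "\<xi> \<in> rays o'" and S: "0 \<le> S" "S \<le> dist o' w"
    and ge: "ereal S \<le> egprod o' (Inr \<xi>) (Inl w)"
  shows "ereal (S - 2) \<le> egprod o' (Inr \<xi>) (Inl (gp o' w S))"
  unfolding egprod_rl[OF \<xi>]
proof (rule ereal_SUP_geI)
  fix b assume b: "b < S - 2"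
  have "ereal (S - (S - 2 - b)) < ereal S" using b by simp
  also have "\<dots> \<le> (SUP n::nat. ereal (gprod o' (\<xi> (real n)) w))" using ge egprod_rl[OF \<xi>] by simp
  finally obtain n :: nat where n: "S - (S - 2 - b) < gprod o' (\<xi> (real n)) w"
    by (auto simp: less_SUP_iff)
  have "min (gprod o' (\<xi> (real n)) w) S - 2 \<le> gprod o' (\<xi> (real n)) (gp o' w S)"
    by (rule hyp_H[OF cat geo gp[OF geo] S])
  moreover have "b < min (gprod o' (\<xi> (real n)) w) S - 2" using n b by (simp add: min_def)
  ultimately have "b < gprod o' (\<xi> (real n)) (gp o' w S)" by linarith
  then show "\<exists>n. ereal b < ereal (gprod o' (\<xi> (real n)) (gp o' w S))" by (intro exI[of _ n]) simp
qed

lemma tail_incl_r: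
  fixes o' :: "'a::metric_space"
  assumes cat: "CAT_minus1 TYPE('a)" and geo: "geodesic_metric TYPE('a)"
    and \<xi>: "\<xi> \<in> rays o'" and \<eta>: "\<eta> \<in> rays o'" and S: "0 \<le> S"
    and ge: "ereal S \<le> egprod o' (Inr \<xi>) (Inr \<eta>)"
  shows "ereal (S - 2) \<le> egprod o' (Inr \<xi>) (Inl (\<eta> S))"
  unfolding egprod_rl[OF \<xi>]
proof (rule ereal_SUP_geI)
  fix b assume b: "b < S - 2"
  have "ereal (S - (S - 2 - b)) < ereal S" using b by simp
  also have "\<dots> \<le> (SUP n::nat. ereal (gprod o' (\<xi> (real n)) (\<eta> (real n))))" using ge egprod_rr[OF \<xi> \<eta>] by simp
  finally obtain n0 :: nat where n0: "S - (S - 2 - b) < gprod o' (\<xi> (real n0)) (\<eta> (real n0))"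
    by (auto simp: less_SUP_iff)
  define n where "n = max n0 (nat \<lceil>S\<rceil>)"
  have nS: "S \<le> real n" unfolding n_def by linarith
  have "gprod o' (\<xi> (real n0)) (\<eta> (real n0)) \<le> gprod o' (\<xi> (real n)) (\<eta> (real n))"
    by (rule gprod_mono_rr[OF \<xi> \<eta>]) (auto simp: n_def)
  with n0 have n: "S - (S - 2 - b) < gprod o' (\<xi> (real n)) (\<eta> (real n))" by simp
  have dn: "dist o' (\<eta> (real n)) = real n" using ray_dist0[OF \<eta>] by simp
  have "min (gprod o' (\<xi> (real n)) (\<eta> (real n))) S - 2 \<le> gprod o' (\<xi> (real n)) (\<eta> S)"
    by (rule hyp_H[OF cat geo ray_seg[OF \<eta>, of "real n"]]) (use S nS dn in auto)
  moreover have "b < min (gprod o' (\<xi> (real n)) (\<eta> (real n))) S - 2" using n b by (simp add: min_def)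
  ultimately have "b < gprod o' (\<xi> (real n)) (\<eta> S)" by linarith
  then show "\<exists>n. ereal b < ereal (gprod o' (\<xi> (real n)) (\<eta> S))" by (intro exI[of _ n]) simp
qed

lemma close_rr:
  fixes o' :: "'a::metric_space"
  assumes cat: "CAT_minus1 TYPE('a)" and \<xi>: "\<xi> \<in> rays o'" and \<zeta>: "\<zeta> \<in> rays o'" and T: "0 \<le> T"
    and gt: "ereal R < egprod o' (Inr \<xi>) (Inr \<zeta>)"
  shows "cosh (dist (\<xi> T) (\<zeta> T)) - 1 \<le> 16 * (sinh T)^2 * exp (-2 * R)"
proof -
  obtain n0 :: nat where n0: "R < gprod o' (\<xi> (real n0)) (\<zeta> (real n0))"
    using gt unfolding egprod_rr[OF \<xi> \<zeta>] by (auto simp: less_SUP_iff)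
  define n where "n = max n0 (nat \<lceil>max T 1\<rceil>)"
  have nT: "max T 1 \<le> real n" unfolding n_def by linarith
  have "gprod o' (\<xi> (real n0)) (\<zeta> (real n0)) \<le> gprod o' (\<xi> (real n)) (\<zeta> (real n))"
    by (rule gprod_mono_rr[OF \<xi> \<zeta>]) (auto simp: n_def)
  with n0 have n: "R < gprod o' (\<xi> (real n)) (\<zeta> (real n))" by simp
  have "cosh (dist (\<xi> T) (\<zeta> T)) - 1 \<le> 16 * (sinh T)^2 * exp (-2 * gprod o' (\<xi> (real n)) (\<zeta> (real n)))"
    by (rule cmp_D[OF cat ray_seg[OF \<xi>] ray_seg[OF \<zeta>]]) (use nT T ray_dist0[OF \<xi>] ray_dist0[OF \<zeta>] in auto)
  also have "\<dots> \<le> 16 * (sinh T)^2 * exp (-2 * R)" using n by (intro mult_left_mono) auto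
  finally show ?thesis .
qed

lemma egprod_lr_le: "\<eta> \<in> rays o' \<Longrightarrow> egprod o' (Inl w) (Inr \<eta>) \<le> ereal (dist w o')"
  unfolding egprod_lr by (auto intro!: SUP_least simp: gprod_le2)

lemma close_lr:
  fixes o' w :: "'a::metric_space"
  assumes cat: "CAT_minus1 TYPE('a)" and geo: "geodesic_metric TYPE('a)"
    and \<eta>: "\<eta> \<in> rays o'" and T: "0 \<le> T" and R: "max T 1 \<le> R"
    and gt: "ereal R < egprod o' (Inl w) (Inr \<eta>)"
  shows "cosh (dist (gp o' w T) (\<eta> T)) - 1 \<le> 16 * (sinh T)^2 * exp (-2 * R)"
    and "R < dist o' w"
proof -
  show dw: "R < dist o' w" using less_le_trans[OF gt egprod_lr_le[OF \<eta>, of w]] by (simp add: dist_commute)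
  obtain n0 :: nat where n0: "R < gprod o' (\<eta> (real n0)) w"
    using gt unfolding egprod_lr[OF \<eta>] by (auto simp: less_SUP_iff)
  define n where "n = max n0 (nat \<lceil>max T 1\<rceil>)"
  have nT: "max T 1 \<le> real n" unfolding n_def by linarith
  have "gprod o' (\<eta> (real n0)) w \<le> gprod o' (\<eta> (real n)) w"
    by (rule gprod_mono_ray[OF \<eta>]) (auto simp: n_def)
  with n0 have n: "R < gprod o' w (\<eta> (real n))" by (simp add: gprod_sym)
  have "cosh (dist (gp o' w T) (\<eta> T)) - 1 \<le> 16 * (sinh T)^2 * exp (-2 * gprod o' w (\<eta> (real n)))"
    by (rule cmp_D[OF cat gp[OF geo] ray_seg[OF \<eta>]]) (use nT T R dw ray_dist0[OF \<eta>] in auto)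
  also have "\<dots> \<le> 16 * (sinh T)^2 * exp (-2 * R)" using n by (intro mult_left_mono) auto
  finally show "cosh (dist (gp o' w T) (\<eta> T)) - 1 \<le> 16 * (sinh T)^2 * exp (-2 * R)" .
qed

lemma U_fin:
  fixes a b :: "real \<Rightarrow> 'a::metric_space"
  assumes cat: "CAT_minus1 TYPE('a)" and a: "geodesic_seg a o' pa" and b: "geodesic_seg b o' pb"
    and T: "0 < T" "T \<le> dist o' pa" "T \<le> dist o' pb"
    and K: "exp (-\<epsilon>) \<le> (1 - exp (- dist (a T) (b T))) * (1 - exp (-2 * T))"
  shows "gprod o' pa pb \<le> gprod o' (a T) (b T) + \<epsilon>"
proof -
  define k1 where "k1 = 1 - exp (- dist (a T) (b T))"
  define k2 where "k2 = 1 - exp (-2 * T)"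
  define kA where "kA = 1 - exp (-2 * dist o' pa)"
  define kB where "kB = 1 - exp (-2 * dist o' pb)"
  have k1: "0 \<le> k1" unfolding k1_def by simp
  have k2: "0 \<le> k2" unfolding k2_def using T by simp
  have kA: "k2 \<le> kA" unfolding k2_def kA_def using T by simp
  have kB: "k2 \<le> kB" unfolding k2_def kB_def using T by simp
  have E: "exp (-2 * gprod o' (a T) (b T)) * k1^2 * kA * kB \<le> exp (-2 * gprod o' pa pb)"
    using cmp_E[OF cat a b T] unfolding k1_def kA_def kB_def .
  have "exp (-\<epsilon>) * exp (-\<epsilon>) \<le> (k1 * k2) * (k1 * k2)"
    using K k1 k2 unfolding k1_def[symmetric] k2_def[symmetric] by (intro mult_mono) auto
  also have "\<dots> \<le> k1^2 * kA * kB"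
  proof -
    have "k2 * k2 \<le> kA * kB" using kA kB k2 by (intro mult_mono) auto
    then have "(k1 * k1) * (k2 * k2) \<le> (k1 * k1) * (kA * kB)" using k1 by (intro mult_left_mono) auto
    then show ?thesis by (simp add: power2_eq_square mult_ac)
  qed
  finally have F: "exp (-2 * \<epsilon>) \<le> k1^2 * kA * kB" by (simp add: mult_exp_exp)
  have "exp (-2 * gprod o' (a T) (b T) + (-2 * \<epsilon>)) = exp (-2 * gprod o' (a T) (b T)) * exp (-2 * \<epsilon>)"
    by (rule exp_add)
  also have "\<dots> \<le> exp (-2 * gprod o' (a T) (b T)) * (k1^2 * kA * kB)"
    using F by (intro mult_left_mono) auto
  also have "\<dots> \<le> exp (-2 * gprod o' pa pb)" using E by (simp add: mult.assoc)
  finally have "-2 * gprod o' (a T) (b T) + (-2 * \<epsilon>) \<le> -2 * gprod o' pa pb" by simp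
  then show ?thesis by simp
qed


lemma U_rr:
  fixes o' :: "'a::metric_space"
  assumes cat: "CAT_minus1 TYPE('a)" and \<xi>: "\<xi> \<in> rays o'" and \<zeta>: "\<zeta> \<in> rays o'" and T: "0 < T"
    and K: "exp (-\<epsilon>) \<le> (1 - exp (- dist (\<xi> T) (\<zeta> T))) * (1 - exp (-2 * T))"
  shows "egprod o' (Inr \<xi>) (Inr \<zeta>) \<le> ereal (gprod o' (\<xi> T) (\<zeta> T) + \<epsilon>)"
  unfolding egprod_rr[OF \<xi> \<zeta>]
proof (rule SUP_least)
  fix n :: nat
  define m where "m = max n (nat \<lceil>T\<rceil>)"
  have mT: "T \<le> real m" unfolding m_def by linarith
  have "gprod o' (\<xi> (real n)) (\<zeta> (real n)) \<le> gprod o' (\<xi> (real m)) (\<zeta> (real m))"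
    by (rule gprod_mono_rr[OF \<xi> \<zeta>]) (auto simp: m_def)
  also have "\<dots> \<le> gprod o' (\<xi> T) (\<zeta> T) + \<epsilon>"
    by (rule U_fin[OF cat ray_seg[OF \<xi>] ray_seg[OF \<zeta>] T _ _ K]) (use mT T ray_dist0[OF \<xi>] ray_dist0[OF \<zeta>] in auto)
  finally show "ereal (gprod o' (\<xi> (real n)) (\<zeta> (real n))) \<le> ereal (gprod o' (\<xi> T) (\<zeta> T) + \<epsilon>)" by simp
qed

lemma U_rl:
  fixes o' w :: "'a::metric_space"
  assumes cat: "CAT_minus1 TYPE('a)" and geo: "geodesic_metric TYPE('a)"
    and \<xi>: "\<xi> \<in> rays o'" and T: "0 < T" "T \<le> dist o' w"
    and K: "exp (-\<epsilon>) \<le> (1 - exp (- dist (\<xi> T) (gp o' w T))) * (1 - exp (-2 * T))"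
  shows "egprod o' (Inr \<xi>) (Inl w) \<le> ereal (gprod o' (\<xi> T) (gp o' w T) + \<epsilon>)"
  unfolding egprod_rl[OF \<xi>]
proof (rule SUP_least)
  fix n :: nat
  define m where "m = max n (nat \<lceil>T\<rceil>)"
  have mT: "T \<le> real m" unfolding m_def by linarith
  have "gprod o' (\<xi> (real n)) w \<le> gprod o' (\<xi> (real m)) w"
    by (rule gprod_mono_ray[OF \<xi>]) (auto simp: m_def)
  also have "\<dots> \<le> gprod o' (\<xi> T) (gp o' w T) + \<epsilon>"
    by (rule U_fin[OF cat ray_seg[OF \<xi>] gp[OF geo] T(1) _ T(2) K]) (use mT T ray_dist0[OF \<xi>] in auto)
  finally show "ereal (gprod o' (\<xi> (real n)) w) \<le> ereal (gprod o' (\<xi> T) (gp o' w T) + \<epsilon>)" by simp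
qed

lemma L_rl:
  fixes o' w :: "'a::metric_space"
  assumes geo: "geodesic_metric TYPE('a)" and \<xi>: "\<xi> \<in> rays o'" and T: "0 \<le> T" "T \<le> dist o' w"
  shows "ereal (gprod o' (\<xi> T) (gp o' w T)) \<le> egprod o' (Inr \<xi>) (Inl w)"
proof -
  have "gprod o' (gp o' w T) (\<xi> T) \<le> gprod o' (gp o' w (dist o' w)) (\<xi> T)"
    by (rule gprod_mono_geo[OF gp[OF geo]]) (use T in auto)
  also have "gp o' w (dist o' w) = w" using geo_end(1)[OF gp[OF geo]] .
  finally have "gprod o' (\<xi> T) (gp o' w T) \<le> gprod o' (\<xi> T) w" by (simp add: gprod_sym)
  then show ?thesis using egprod_rl_ge[OF \<xi> T(1), of w] by (meson ereal_less_eq(3) order_trans)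
qed

lemma KK:
  assumes a: "0 < a" and X: "- ln a \<le> X"
  shows "1 - a \<le> 1 - exp (- (X::real))"
proof -
  have "exp (- X) \<le> exp (ln a)" using X by simp
  then show ?thesis using a by simp
qed

lemma ereal_between:
  assumes "ereal a \<le> x" "x \<le> ereal b"
  shows "\<exists>v. x = ereal v \<and> a \<le> v \<and> v \<le> b"
  using assms by (cases x) auto

lemma cosh_lt_imp:
  assumes "cosh (x::real) - 1 < cosh y - 1" "0 \<le> x" "0 \<le> y"
  shows "x < y"
proof (rule ccontr)
  assume "\<not> x < y"
  then have "cosh y \<le> cosh x" using assms cosh_real_nonneg_le_iff by auto
  then show False using assms by simp
qed

lemma cont_est:
  fixes o' :: "'a::metric_space"
  assumes cat: "CAT_minus1 TYPE('a)" and geo: "geodesic_metric TYPE('a)"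
    and \<eta>: "\<eta> \<in> rays o'" and M: "0 \<le> M" and \<epsilon>: "0 < \<epsilon>"
  shows "\<exists>R. \<forall>z\<in>Xbar o'. ereal R < egprod o' z (Inr \<eta>) \<longrightarrow>
           (\<forall>\<xi>\<in>rays o'. egprod o' (Inr \<xi>) (Inr \<eta>) \<le> ereal M \<longrightarrow>
              (\<exists>v. egprod o' (Inr \<xi>) z = ereal v \<and> \<bar>v - real_of_ereal (egprod o' (Inr \<xi>) (Inr \<eta>))\<bar> \<le> \<epsilon>))"
proof -
  define a where "a = 1 - exp (-\<epsilon>/4)"
  have a0: "0 < a" unfolding a_def using \<epsilon> by simp
  have a1: "a < 1" unfolding a_def by simp
  define T where "T = max 1 ((2*M + 1 - ln a)/2)"
  have T1: "1 \<le> T" unfolding T_def by simp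
  have T0: "0 < T" using T1 by simp
  have lna: "ln a < 0" using a0 a1 by simp
  have "(2*M + 1 - ln a)/2 \<le> T" unfolding T_def by (rule max.cobounded2)
  then have "2*M + 1 - ln a \<le> 2*T" by (simp add: field_simps)
  then have TX: "- ln a \<le> 2*T - 2*M - 1" by simp
  have TX2: "- ln a \<le> 2*T" using TX M by simp
  have Kgood: "exp (-(\<epsilon>/2)) \<le> (1 - exp (- X)) * (1 - exp (-2 * T))" if X: "2*T - 2*M - 1 \<le> X" for X
  proof -
    have e: "exp (-\<epsilon>/4) = 1 - a" unfolding a_def by simp
    have "exp (-(\<epsilon>/2)) = exp (-\<epsilon>/4) * exp (-\<epsilon>/4)" by (simp add: mult_exp_exp)
    also have "\<dots> \<le> (1 - exp (- X)) * (1 - exp (- (2 * T)))"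
      unfolding e using KK[OF a0, of X] KK[OF a0, of "2*T"] TX TX2 X a1 lna
      by (intro mult_mono) auto
    finally show ?thesis by simp
  qed
  define \<delta>0 where "\<delta>0 = min 1 (\<epsilon>/4)"
  have d0: "0 < \<delta>0" unfolding \<delta>0_def using \<epsilon> by simp
  define c0 where "c0 = cosh \<delta>0 - 1"
  have c0: "0 < c0" unfolding c0_def using d0 cosh_real_one_iff[of \<delta>0] cosh_real_ge_1[of \<delta>0] by linarith
  have sT: "0 < sinh T" using T0 by simp
  define R where "R = max T 1 + \<bar>ln (16 * (sinh T)^2 / c0)\<bar> / 2 + 1"
  have RT: "max T 1 \<le> R" unfolding R_def by simp
  have Rsmall: "16 * (sinh T)^2 * exp (-2 * R) < c0"
  proof -
    have pos: "0 < 16 * (sinh T)^2 / c0" using sT c0 by simp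
    have "-2 * R < - ln (16 * (sinh T)^2 / c0)" unfolding R_def using T1 by (simp add: abs_if field_simps)
    then have "exp (-2 * R) < exp (- ln (16 * (sinh T)^2 / c0))" by simp
    also have "\<dots> = c0 / (16 * (sinh T)^2)" using pos by (simp add: exp_minus)
    finally show ?thesis using sT by (simp add: field_simps)
  qed
  show ?thesis
  proof (rule exI[of _ R], intro ballI impI)
    fix z \<xi> assume z: "z \<in> Xbar o'" and zR: "ereal R < egprod o' z (Inr \<eta>)"
      and \<xi>: "\<xi> \<in> rays o'" and \<xi>M: "egprod o' (Inr \<xi>) (Inr \<eta>) \<le> ereal M"
    define gT where "gT = gprod o' (\<xi> T) (\<eta> T)"
    define dT where "dT = dist (\<xi> T) (\<eta> T)"
    have "ereal gT \<le> ereal M" using order_trans[OF egprod_rr_ge[OF \<xi> \<eta>, of T] \<xi>M] T0 unfolding gT_def by simp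
    then have gTM: "gT \<le> M" by simp
    have dTg: "dT = 2 * T - 2 * gT" unfolding dT_def gT_def gprod_def
      using ray_dist0[OF \<xi>, of T] ray_dist0[OF \<eta>, of T] T0 by (simp add: field_simps)
    have dTM: "2 * T - 2 * M \<le> dT" using dTg gTM by simp
    have up0: "egprod o' (Inr \<xi>) (Inr \<eta>) \<le> ereal (gT + \<epsilon>/2)"
      unfolding gT_def by (rule U_rr[OF cat \<xi> \<eta> T0 Kgood]) (use dTM dT_def in simp)
    obtain v0 where v0: "egprod o' (Inr \<xi>) (Inr \<eta>) = ereal v0" "gT \<le> v0" "v0 \<le> gT + \<epsilon>/2"
      using ereal_between[OF egprod_rr_ge[OF \<xi> \<eta>, of T] up0] T0 unfolding gT_def by auto
    show "\<exists>v. egprod o' (Inr \<xi>) z = ereal v \<and> \<bar>v - real_of_ereal (egprod o' (Inr \<xi>) (Inr \<eta>))\<bar> \<le> \<epsilon>"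
    proof (cases z)
      case (Inl w)
      define c where "c = gp o' w"
      define D where "D = dist (c T) (\<eta> T)"
      have zR': "ereal R < egprod o' (Inl w) (Inr \<eta>)" using zR Inl by simp
      have "cosh D - 1 \<le> 16 * (sinh T)^2 * exp (-2 * R)" and dw: "R < dist o' w"
        using close_lr[OF cat geo \<eta> _ RT zR'] T0 unfolding D_def c_def by auto
      then have "cosh D - 1 < cosh \<delta>0 - 1" using Rsmall c0_def by simp
      then have D: "D < \<delta>0" by (rule cosh_lt_imp) (use d0 D_def in auto)
      have Tw: "T \<le> dist o' w" using dw RT by simp
      define g' where "g' = gprod o' (\<xi> T) (c T)"
      have gg: "\<bar>g' - gT\<bar> \<le> D" unfolding g'_def gT_def D_def by (rule gprod_lip2)
      have d': "2*T - 2*M - 1 \<le> dist (\<xi> T) (c T)"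
        using dist_triangle[of "\<xi> T" "\<eta> T" "c T"] D dTM \<delta>0_def unfolding dT_def D_def
        by (simp add: dist_commute)
      have up: "egprod o' (Inr \<xi>) (Inl w) \<le> ereal (g' + \<epsilon>/2)"
        unfolding g'_def c_def by (rule U_rl[OF cat geo \<xi> T0 Tw Kgood]) (use d' c_def in simp)
      have lo: "ereal g' \<le> egprod o' (Inr \<xi>) (Inl w)"
        unfolding g'_def c_def by (rule L_rl[OF geo \<xi> _ Tw]) (use T0 in simp)
      obtain v where v: "egprod o' (Inr \<xi>) (Inl w) = ereal v" "g' \<le> v" "v \<le> g' + \<epsilon>/2"
        using ereal_between[OF lo up] by auto
      have "\<bar>v - v0\<bar> \<le> \<epsilon>" using v v0 gg D \<delta>0_def by (simp add: abs_le_iff field_simps)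
      then show ?thesis using v v0 Inl by auto
    next
      case (Inr \<zeta>)
      have \<zeta>: "\<zeta> \<in> rays o'" using z Inr unfolding Xbar_def by auto
      define D where "D = dist (\<zeta> T) (\<eta> T)"
      have zR': "ereal R < egprod o' (Inr \<zeta>) (Inr \<eta>)" using zR Inr by simp
      have "cosh D - 1 \<le> 16 * (sinh T)^2 * exp (-2 * R)"
        using close_rr[OF cat \<zeta> \<eta> _ zR'] T0 unfolding D_def by auto
      then have "cosh D - 1 < cosh \<delta>0 - 1" using Rsmall c0_def by simp
      then have D: "D < \<delta>0" by (rule cosh_lt_imp) (use d0 D_def in auto)
      define g' where "g' = gprod o' (\<xi> T) (\<zeta> T)"
      have gg: "\<bar>g' - gT\<bar> \<le> D" unfolding g'_def gT_def D_def by (rule gprod_lip2)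
      have d': "2*T - 2*M - 1 \<le> dist (\<xi> T) (\<zeta> T)"
        using dist_triangle[of "\<xi> T" "\<eta> T" "\<zeta> T"] D dTM \<delta>0_def unfolding dT_def D_def
        by (simp add: dist_commute)
      have up: "egprod o' (Inr \<xi>) (Inr \<zeta>) \<le> ereal (g' + \<epsilon>/2)"
        unfolding g'_def by (rule U_rr[OF cat \<xi> \<zeta> T0 Kgood]) (use d' in simp)
      have lo: "ereal g' \<le> egprod o' (Inr \<xi>) (Inr \<zeta>)"
        unfolding g'_def by (rule egprod_rr_ge[OF \<xi> \<zeta>]) (use T0 in simp)
      obtain v where v: "egprod o' (Inr \<xi>) (Inr \<zeta>) = ereal v" "g' \<le> v" "v \<le> g' + \<epsilon>/2"
        using ereal_between[OF lo up] by auto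
      have "\<bar>v - v0\<bar> \<le> \<epsilon>" using v v0 gg D \<delta>0_def by (simp add: abs_le_iff field_simps)
      then show ?thesis using v v0 Inr by auto
    qed
  qed
qed


lemma egprod_self:
  assumes \<xi>: "\<xi> \<in> rays o'"
  shows "egprod o' (Inr \<xi>) (Inr \<xi>) = \<infinity>"
proof -
  have g: "gprod o' (\<xi> (real n)) (\<xi> (real n)) = real n" for n :: nat
    unfolding gprod_def using ray_dist0[OF \<xi>, of "real n"] by simp
  have "(SUP n::nat. ereal (real n)) = (top::ereal)"
    unfolding SUP_eq_top_iff
  proof (intro allI impI)
    fix x :: ereal assume "x < top"
    then obtain b where "x \<le> ereal b" by (cases x) auto
    moreover obtain n :: nat where "b < real n" using reals_Archimedean2 by blast
    ultimately have "x < ereal (real n)" by (meson ereal_less_eq(3) le_less_trans less_ereal.simps(1))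
    then show "\<exists>i\<in>UNIV. x < ereal (real i)" by blast
  qed
  then show ?thesis unfolding egprod_rr[OF \<xi> \<xi>] g by (simp add: top_ereal_def)
qed

lemma exists_R:
  assumes "0 < (c::real)"
  shows "\<exists>R. 16 * (sinh T)^2 * exp (-2 * R) < c"
proof (cases "sinh T = 0")
  case True then show ?thesis using assms by simp
next
  case False
  then have sT: "0 < (sinh T)^2" by simp
  define R where "R = \<bar>ln (16 * (sinh T)^2 / c)\<bar> / 2 + 1"
  have pos: "0 < 16 * (sinh T)^2 / c" using sT assms by simp
  have "-2 * R < - ln (16 * (sinh T)^2 / c)" unfolding R_def by (simp add: abs_if field_simps)
  then have "exp (-2 * R) < exp (- ln (16 * (sinh T)^2 / c))" by simp
  also have "\<dots> = c / (16 * (sinh T)^2)" using pos by (simp add: exp_minus)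
  finally show ?thesis using sT by (intro exI[of _ R]) (simp add: field_simps)
qed

lemma ray_point_cont:
  fixes o' :: "'a::metric_space"
  assumes cat: "CAT_minus1 TYPE('a)" and \<xi>0: "\<xi>0 \<in> rays o'" and T: "0 \<le> T" and r: "0 < r"
  shows "\<exists>R. \<forall>\<xi>\<in>rays o'. ereal R < egprod o' (Inr \<xi>) (Inr \<xi>0) \<longrightarrow> dist (\<xi> T) (\<xi>0 T) < r"
proof -
  have "0 < cosh r - 1" using r cosh_real_one_iff[of r] cosh_real_ge_1[of r] by linarith
  then obtain R where R: "16 * (sinh T)^2 * exp (-2 * R) < cosh r - 1" using exists_R by blast
  show ?thesis
  proof (rule exI[of _ R], intro ballI impI)
    fix \<xi> assume \<xi>: "\<xi> \<in> rays o'" and gt: "ereal R < egprod o' (Inr \<xi>) (Inr \<xi>0)"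
    have "cosh (dist (\<xi> T) (\<xi>0 T)) - 1 < cosh r - 1"
      using close_rr[OF cat \<xi> \<xi>0 T gt] R by simp
    then show "dist (\<xi> T) (\<xi>0 T) < r" by (rule cosh_lt_imp) (use r in auto)
  qed
qed

definition bd_basis :: "'a::metric_space \<Rightarrow> (real \<Rightarrow> 'a) set set" where
  "bd_basis o' = {{\<eta> \<in> rays o'. egprod o' (Inr \<eta>) (Inr \<xi>) > ereal R} | \<xi> R. \<xi> \<in> rays o'}"

lemma bd_top_eq: "bd_top o' = topology_generated_by (bd_basis o')"
  unfolding bd_top_def bd_basis_def ..

lemma topspace_bd: "topspace (bd_top o') = rays o'"
proof -
  have "\<Union>(bd_basis o') = rays o'"
  proof
    show "\<Union>(bd_basis o') \<subseteq> rays o'" unfolding bd_basis_def by auto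
    show "rays o' \<subseteq> \<Union>(bd_basis o')"
    proof
      fix \<xi> assume \<xi>: "\<xi> \<in> rays o'"
      have "\<xi> \<in> {\<eta> \<in> rays o'. egprod o' (Inr \<eta>) (Inr \<xi>) > ereal 0}" using \<xi> egprod_self[OF \<xi>] by simp
      then show "\<xi> \<in> \<Union>(bd_basis o')" unfolding bd_basis_def using \<xi> by blast
    qed
  qed
  then show ?thesis unfolding bd_top_eq by simp
qed

lemma bd_open:
  fixes o' :: "'a::metric_space"
  assumes "U \<subseteq> rays o'"
    and "\<And>\<xi>. \<xi> \<in> U \<Longrightarrow> \<exists>R. {\<eta> \<in> rays o'. egprod o' (Inr \<eta>) (Inr \<xi>) > ereal R} \<subseteq> U"
  shows "openin (bd_top o') U"
proof -
  define K where "K = {B \<in> bd_basis o'. B \<subseteq> U}"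
  have "U = \<Union>K"
  proof
    show "\<Union>K \<subseteq> U" unfolding K_def by auto
    show "U \<subseteq> \<Union>K"
    proof
      fix \<xi> assume \<xi>U: "\<xi> \<in> U"
      then have \<xi>: "\<xi> \<in> rays o'" using assms(1) by auto
      obtain R where R: "{\<eta> \<in> rays o'. egprod o' (Inr \<eta>) (Inr \<xi>) > ereal R} \<subseteq> U" using assms(2)[OF \<xi>U] by blast
      have "{\<eta> \<in> rays o'. egprod o' (Inr \<eta>) (Inr \<xi>) > ereal R} \<in> K"
        unfolding K_def bd_basis_def using R \<xi> by blast
      moreover have "\<xi> \<in> {\<eta> \<in> rays o'. egprod o' (Inr \<eta>) (Inr \<xi>) > ereal R}" using \<xi> egprod_self[OF \<xi>] by simp
      ultimately show "\<xi> \<in> \<Union>K" by blast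
    qed
  qed
  moreover have "generate_topology_on (bd_basis o') (\<Union>K)"
    by (rule generate_topology_on.UN) (auto simp: K_def intro: generate_topology_on.Basis)
  ultimately show ?thesis unfolding bd_top_eq openin_topology_generated_by_iff by simp
qed

lemma bd_cont_open:
  fixes o' :: "'a::metric_space" and f :: "(real \<Rightarrow> 'a) \<Rightarrow> real"
  assumes "\<And>\<xi>0 r. \<xi>0 \<in> rays o' \<Longrightarrow> 0 < r \<Longrightarrow> \<exists>R. \<forall>\<xi>\<in>rays o'. ereal R < egprod o' (Inr \<xi>) (Inr \<xi>0) \<longrightarrow> \<bar>f \<xi> - f \<xi>0\<bar> < r"
    and "open U"
  shows "openin (bd_top o') {\<xi> \<in> rays o'. f \<xi> \<in> U}"
proof (rule bd_open)
  fix \<xi>0 assume "\<xi>0 \<in> {\<xi> \<in> rays o'. f \<xi> \<in> U}"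
  then have \<xi>0: "\<xi>0 \<in> rays o'" "f \<xi>0 \<in> U" by auto
  obtain r where r: "0 < r" "ball (f \<xi>0) r \<subseteq> U" using assms(2) \<xi>0(2) open_contains_ball by blast
  obtain R where R: "\<forall>\<xi>\<in>rays o'. ereal R < egprod o' (Inr \<xi>) (Inr \<xi>0) \<longrightarrow> \<bar>f \<xi> - f \<xi>0\<bar> < r"
    using assms(1)[OF \<xi>0(1) r(1)] by blast
  show "\<exists>R. {\<eta> \<in> rays o'. ereal R < egprod o' (Inr \<eta>) (Inr \<xi>0)} \<subseteq> {\<xi> \<in> rays o'. f \<xi> \<in> U}"
  proof (rule exI[of _ R], safe)
    fix \<xi> assume "\<xi> \<in> rays o'" "ereal R < egprod o' (Inr \<xi>) (Inr \<xi>0)"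
    then have "\<bar>f \<xi> - f \<xi>0\<bar> < r" using R by blast
    then show "f \<xi> \<in> U" using r(2) by (auto simp: dist_real_def abs_minus_commute)
  qed
qed auto

lemma bd_measurable:
  fixes o' :: "'a::metric_space" and f :: "(real \<Rightarrow> 'a) \<Rightarrow> real"
  assumes sp: "space N = rays o'" and st: "sets N = sets (borel_of (bd_top o'))"
    and op: "\<And>U. open U \<Longrightarrow> openin (bd_top o') {\<xi> \<in> rays o'. f \<xi> \<in> U}"
  shows "f \<in> borel_measurable N"
proof (rule borel_measurableI)
  fix U :: "real set" assume U: "open U"
  have sub: "{U. openin (bd_top o') U} \<subseteq> Pow (topspace (bd_top o'))" by (auto dest: openin_subset)
  have "sets (borel_of (bd_top o')) = sigma_sets (topspace (bd_top o')) {U. openin (bd_top o') U}"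
    unfolding borel_of_def by (rule sets_measure_of[OF sub])
  then have "sets N = sigma_sets (rays o') {U. openin (bd_top o') U}"
    unfolding st topspace_bd .
  moreover have "f -` U \<inter> space N = {\<xi> \<in> rays o'. f \<xi> \<in> U}" using sp by auto
  ultimately show "f -` U \<inter> space N \<in> sets N" using op[OF U] by auto
qed


lemma egprod_meas:
  fixes o' :: "'a::metric_space"
  assumes cat: "CAT_minus1 TYPE('a)"
    and sp: "space N = rays o'" and st: "sets N = sets (borel_of (bd_top o'))"
    and z: "z \<in> Xbar o'"
  shows "(\<lambda>\<xi>. egprod o' (Inr \<xi>) z) \<in> borel_measurable N"
proof -
  have cont: "(\<lambda>\<xi>. g (\<xi> t)) \<in> borel_measurable N"
    if t: "0 \<le> t" and lip: "\<And>y y'. \<bar>g y - g y'\<bar> \<le> dist y y'" for g :: "'a \<Rightarrow> real" and t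
  proof (rule bd_measurable[OF sp st], rule bd_cont_open)
    fix \<xi>0 and r :: real assume \<xi>0: "\<xi>0 \<in> rays o'" and r: "0 < r"
    obtain R where R: "\<forall>\<xi>\<in>rays o'. ereal R < egprod o' (Inr \<xi>) (Inr \<xi>0) \<longrightarrow> dist (\<xi> t) (\<xi>0 t) < r"
      using ray_point_cont[OF cat \<xi>0 t r] by blast
    show "\<exists>R. \<forall>\<xi>\<in>rays o'. ereal R < egprod o' (Inr \<xi>) (Inr \<xi>0) \<longrightarrow> \<bar>g (\<xi> t) - g (\<xi>0 t)\<bar> < r"
      using R lip le_less_trans by blast
  qed
  show ?thesis
  proof (cases z)
    case (Inl w)
    have "(\<lambda>\<xi>. SUP n\<in>(UNIV::nat set). ereal (gprod o' (\<xi> (real n)) w)) \<in> borel_measurable N"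
      by (rule borel_measurable_SUP) (auto intro!: borel_measurable_ereal cont gprod_lip)
    then show ?thesis unfolding Inl
      by (rule measurable_cong[THEN iffD1, rotated]) (simp add: egprod_rl sp del: egprod.simps)
  next
    case (Inr \<zeta>)
    have \<zeta>: "\<zeta> \<in> rays o'" using z Inr unfolding Xbar_def by auto
    have "(\<lambda>\<xi>. SUP n\<in>(UNIV::nat set). ereal (gprod o' (\<xi> (real n)) (\<zeta> (real n)))) \<in> borel_measurable N"
      by (rule borel_measurable_SUP) (auto intro!: borel_measurable_ereal cont gprod_lip)
    then show ?thesis unfolding Inr
      by (rule measurable_cong[THEN iffD1, rotated]) (simp add: egprod_rr sp \<zeta> del: egprod.simps)
  qed
qed

lemma busemann_eq:
  fixes o' x :: "'a::metric_space"
  assumes \<xi>: "\<xi> \<in> rays o'" and G: "egprod o' (Inr \<xi>) (Inl x) = ereal G"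
  shows "busemann \<xi> x o' = dist x o' - 2 * G"
proof -
  have "((\<lambda>t. ereal (gprod o' (\<xi> t) x)) \<longlongrightarrow> ereal G) at_top"
    using mono_Lim_SUP[of "\<lambda>t. ereal (gprod o' (\<xi> t) x)"] gprod_mono_ray[OF \<xi>] G egprod_rl[OF \<xi>] by auto
  then have "((\<lambda>t. gprod o' (\<xi> t) x) \<longlongrightarrow> G) at_top" by (simp add: lim_ereal)
  then have "((\<lambda>t. dist x o' - 2 * gprod o' (\<xi> t) x) \<longlongrightarrow> dist x o' - 2 * G) at_top"
    by (intro tendsto_intros)
  moreover have "\<forall>\<^sub>F t in at_top. dist x o' - 2 * gprod o' (\<xi> t) x = dist x (\<xi> t) - dist o' (\<xi> t)"
    using eventually_ge_at_top[of "0::real"]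
  proof eventually_elim
    case (elim t)
    then show ?case unfolding gprod_def using ray_dist0[OF \<xi> elim] by (simp add: dist_commute field_simps)
  qed
  ultimately have "((\<lambda>t. dist x (\<xi> t) - dist o' (\<xi> t)) \<longlongrightarrow> dist x o' - 2 * G) at_top"
    by (rule Lim_transform_eventually)
  then show ?thesis unfolding busemann_def by (rule tendsto_Lim[rotated]) simp
qed


lemma PS_unpack:
  assumes "PS_density o' G \<mu>"
  shows "prob_space (\<mu> x)" "space (\<mu> x) = rays o'" "sets (\<mu> x) = sets (borel_of (bd_top o'))"
    "\<mu> x = density (\<mu> y) (\<lambda>\<xi>. ennreal (exp (- crit_exp o' G * busemann \<xi> x y)))"
  using assms unfolding PS_density_def by auto

lemma egprod_rl_finite:
  assumes "\<xi> \<in> rays o'"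
  shows "egprod o' (Inr \<xi>) (Inl w) = ereal (real_of_ereal (egprod o' (Inr \<xi>) (Inl w)))"
  using egprod_rl_bounds[OF assms, of w] by (cases "egprod o' (Inr \<xi>) (Inl w)") auto

lemma set_meas_ge:
  fixes o' :: "'a::metric_space"
  assumes cat: "CAT_minus1 TYPE('a)"
    and sp: "space N = rays o'" and st: "sets N = sets (borel_of (bd_top o'))"
    and z: "z \<in> Xbar o'"
  shows "{\<xi> \<in> rays o'. a \<le> egprod o' (Inr \<xi>) z} \<in> sets N"
proof -
  have [measurable]: "(\<lambda>\<xi>. egprod o' (Inr \<xi>) z) \<in> borel_measurable N" by (rule egprod_meas[OF cat sp st z])
  have "{\<xi> \<in> space N. a \<le> egprod o' (Inr \<xi>) z} \<in> sets N" by measurable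
  then show ?thesis using sp by simp
qed

lemma tail_bound_pt:
  fixes o' x :: "'a::metric_space" and \<mu> :: "'a \<Rightarrow> (real \<Rightarrow> 'a) measure"
  assumes cat: "CAT_minus1 TYPE('a)" and PS: "PS_density o' G \<mu>" and \<delta>0: "0 \<le> crit_exp o' G"
    and x: "dist x o' = S"
  shows "emeasure (\<mu> o') {\<xi> \<in> rays o'. ereal (S - 2) \<le> egprod o' (Inr \<xi>) (Inl x)}
           \<le> ennreal (exp (4 * crit_exp o' G - crit_exp o' G * S))"
proof -
  define \<delta> where "\<delta> = crit_exp o' G"
  have \<delta>: "0 \<le> \<delta>" using \<delta>0 \<delta>_def by simp
  note sp = PS_unpack(2)[OF PS] and st = PS_unpack(3)[OF PS]
  define A where "A = {\<xi> \<in> rays o'. ereal (S - 2) \<le> egprod o' (Inr \<xi>) (Inl x)}"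
  have xX: "Inl x \<in> Xbar o'" unfolding Xbar_def by simp
  have A: "A \<in> sets (\<mu> o')" unfolding A_def by (rule set_meas_ge[OF cat sp st xX])
  define f where "f = (\<lambda>\<xi>. ennreal (exp (- \<delta> * busemann \<xi> x o')))"
  have dens: "\<mu> x = density (\<mu> o') f" unfolding f_def \<delta>_def by (rule PS_unpack(4)[OF PS])
  have [measurable]: "(\<lambda>\<xi>. egprod o' (Inr \<xi>) (Inl x)) \<in> borel_measurable (\<mu> o')"
    by (rule egprod_meas[OF cat sp st xX])
  have fm: "f \<in> borel_measurable (\<mu> o')"
  proof -
    have "(\<lambda>\<xi>. ennreal (exp (- \<delta> * (dist x o' - 2 * real_of_ereal (egprod o' (Inr \<xi>) (Inl x))))))
          \<in> borel_measurable (\<mu> o')" by measurable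
    moreover have "\<And>\<xi>. \<xi> \<in> space (\<mu> o') \<Longrightarrow> ennreal (exp (- \<delta> * (dist x o' - 2 * real_of_ereal (egprod o' (Inr \<xi>) (Inl x))))) = f \<xi>"
      unfolding f_def using busemann_eq egprod_rl_finite sp by (metis)
    ultimately show ?thesis by (rule measurable_cong[THEN iffD1, rotated])
  qed
  have "1 = emeasure (\<mu> x) (rays o')"
    using prob_space.emeasure_space_1[OF PS_unpack(1)[OF PS, of x]] PS_unpack(2)[OF PS, of x] by simp
  also have "\<dots> = (\<integral>\<^sup>+\<xi>. f \<xi> * indicator (rays o') \<xi> \<partial>\<mu> o')"
    unfolding dens by (rule emeasure_density[OF fm]) (use sp sets.top in metis)
  also have "\<dots> \<ge> (\<integral>\<^sup>+\<xi>. ennreal (exp (\<delta> * S - 4 * \<delta>)) * indicator A \<xi> \<partial>\<mu> o')"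
  proof (rule nn_integral_mono)
    fix \<xi> assume "\<xi> \<in> space (\<mu> o')"
    then have \<xi>: "\<xi> \<in> rays o'" using sp by simp
    show "ennreal (exp (\<delta> * S - 4 * \<delta>)) * indicator A \<xi> \<le> f \<xi> * indicator (rays o') \<xi>"
    proof (cases "\<xi> \<in> A")
      case True
      define g where "g = real_of_ereal (egprod o' (Inr \<xi>) (Inl x))"
      have ge: "egprod o' (Inr \<xi>) (Inl x) = ereal g" unfolding g_def by (rule egprod_rl_finite[OF \<xi>])
      have gS: "S - 2 \<le> g" using True ge unfolding A_def by simp
      have b: "busemann \<xi> x o' = S - 2 * g" using busemann_eq[OF \<xi> ge] x by simp
      have "\<delta> * S - 4 * \<delta> \<le> - \<delta> * (S - 2 * g)" using gS \<delta> mult_left_mono[OF gS \<delta>] by (simp add: algebra_simps)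
      then have "exp (\<delta> * S - 4 * \<delta>) \<le> exp (- \<delta> * busemann \<xi> x o')" unfolding b by simp
      then show ?thesis using True \<xi> unfolding f_def by (simp add: ennreal_leI)
    qed simp
  qed
  also have "(\<integral>\<^sup>+\<xi>. ennreal (exp (\<delta> * S - 4 * \<delta>)) * indicator A \<xi> \<partial>\<mu> o') = ennreal (exp (\<delta> * S - 4 * \<delta>)) * emeasure (\<mu> o') A"
    by (rule nn_integral_cmult_indicator[OF A])
  finally have E: "ennreal (exp (\<delta> * S - 4 * \<delta>)) * emeasure (\<mu> o') A \<le> 1" .
  have "emeasure (\<mu> o') A = ennreal (exp (4 * \<delta> - \<delta> * S)) * (ennreal (exp (\<delta> * S - 4 * \<delta>)) * emeasure (\<mu> o') A)"
  proof -
    have "ennreal (exp (4 * \<delta> - \<delta> * S)) * ennreal (exp (\<delta> * S - 4 * \<delta>)) = 1"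
      by (simp add: ennreal_mult''[symmetric] mult_exp_exp)
    then show ?thesis by (simp add: mult.assoc[symmetric])
  qed
  also have "\<dots> \<le> ennreal (exp (4 * \<delta> - \<delta> * S)) * 1" using E by (intro mult_left_mono) auto
  finally show ?thesis unfolding A_def \<delta>_def by simp
qed


lemma tail_bound:
  fixes o' :: "'a::metric_space" and \<mu> :: "'a \<Rightarrow> (real \<Rightarrow> 'a) measure"
  assumes cat: "CAT_minus1 TYPE('a)" and geo: "geodesic_metric TYPE('a)"
    and PS: "PS_density o' G \<mu>" and \<delta>0: "0 \<le> crit_exp o' G"
    and z: "z \<in> Xbar o'" and S: "0 \<le> S"
  shows "emeasure (\<mu> o') {\<xi> \<in> rays o'. ereal S \<le> egprod o' (Inr \<xi>) z}
           \<le> ennreal (exp (4 * crit_exp o' G - crit_exp o' G * S))"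
proof -
  note sp = PS_unpack(2)[OF PS] and st = PS_unpack(3)[OF PS]
  have mono: "emeasure (\<mu> o') {\<xi> \<in> rays o'. ereal S \<le> egprod o' (Inr \<xi>) z}
           \<le> ennreal (exp (4 * crit_exp o' G - crit_exp o' G * S))"
    if x: "dist x o' = S" and sub: "{\<xi> \<in> rays o'. ereal S \<le> egprod o' (Inr \<xi>) z}
          \<subseteq> {\<xi> \<in> rays o'. ereal (S - 2) \<le> egprod o' (Inr \<xi>) (Inl x)}" for x
  proof -
    have xX: "Inl x \<in> Xbar o'" unfolding Xbar_def by simp
    have "emeasure (\<mu> o') {\<xi> \<in> rays o'. ereal S \<le> egprod o' (Inr \<xi>) z}
        \<le> emeasure (\<mu> o') {\<xi> \<in> rays o'. ereal (S - 2) \<le> egprod o' (Inr \<xi>) (Inl x)}"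
      by (rule emeasure_mono[OF sub set_meas_ge[OF cat sp st xX]])
    also have "\<dots> \<le> ennreal (exp (4 * crit_exp o' G - crit_exp o' G * S))"
      by (rule tail_bound_pt[OF cat PS \<delta>0 x])
    finally show ?thesis .
  qed
  show ?thesis
  proof (cases z)
    case (Inl w)
    show ?thesis
    proof (cases "S \<le> dist o' w")
      case True
      show ?thesis
      proof (rule mono)
        show "dist (gp o' w S) o' = S" using geo_dist0[OF gp[OF geo] S True] .
        show "{\<xi> \<in> rays o'. ereal S \<le> egprod o' (Inr \<xi>) z}
          \<subseteq> {\<xi> \<in> rays o'. ereal (S - 2) \<le> egprod o' (Inr \<xi>) (Inl (gp o' w S))}"
          using tail_incl_l[OF cat geo _ S True] Inl by auto
      qed
    next
      case False
      have "{\<xi> \<in> rays o'. ereal S \<le> egprod o' (Inr \<xi>) z} = {}"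
      proof (safe)
        fix \<xi> assume \<xi>: "\<xi> \<in> rays o'" and le: "ereal S \<le> egprod o' (Inr \<xi>) z"
        have "ereal S \<le> ereal (dist w o')"
          using order_trans[OF le[unfolded Inl] egprod_rl_bounds(2)[OF \<xi>, of w]] .
        then show "\<xi> \<in> {}" using False by (simp add: dist_commute)
      qed
      then show ?thesis by (simp del: Collect_empty_eq)
    qed
  next
    case (Inr \<eta>)
    have \<eta>: "\<eta> \<in> rays o'" using z Inr unfolding Xbar_def by auto
    show ?thesis
    proof (rule mono)
      show "dist (\<eta> S) o' = S" using ray_dist0[OF \<eta> S] by simp
      show "{\<xi> \<in> rays o'. ereal S \<le> egprod o' (Inr \<xi>) z}
          \<subseteq> {\<xi> \<in> rays o'. ereal (S - 2) \<le> egprod o' (Inr \<xi>) (Inl (\<eta> S))}"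
        using tail_incl_r[OF cat geo _ \<eta> S] Inr by auto
    qed
  qed
qed

lemma sum_ones_top: "(\<Sum>n. (1::ennreal)) = top"
proof -
  have "of_nat N \<le> (\<Sum>n. (1::ennreal))" for N
  proof -
    have "(\<Sum>n<N. (1::ennreal)) \<le> (\<Sum>n. 1)" by (rule sum_le_suminf) auto
    then show ?thesis by simp
  qed
  then have "(SUP N. of_nat N :: ennreal) \<le> (\<Sum>n. (1::ennreal))" by (rule SUP_least)
  then show ?thesis unfolding ennreal_SUP_of_nat_eq_top by (simp add: top_unique)
qed

lemma layer_cake_pt:
  fixes y :: ereal and S :: real
  assumes S: "0 \<le> S"
  shows "e2ennreal y * (if ereal S \<le> y then 1 else 0)
    \<le> ennreal S * (if ereal S \<le> y then 1 else 0) + (\<Sum>n. if ereal (S + real n) \<le> y then 1 else (0::ennreal))"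
proof (cases y)
  case (real r)
  show ?thesis
  proof (cases "S \<le> r")
    case False then show ?thesis using real by simp
  next
    case True
    define N where "N = nat \<lfloor>r - S\<rfloor> + 1"
    have "(\<Sum>n. if ereal (S + real n) \<le> y then 1 else (0::ennreal)) = (\<Sum>n<N. if ereal (S + real n) \<le> y then 1 else 0)"
    proof (rule suminf_finite)
      fix n assume "n \<notin> {..<N}"
      then have "N \<le> n" by simp
      then have "r < S + real n" unfolding N_def by linarith
      then show "(if ereal (S + real n) \<le> y then 1 else (0::ennreal)) = 0" using real by simp
    qed simp
    also have "\<dots> = (\<Sum>n<N. (1::ennreal))"
    proof (rule sum.cong)
      fix n assume "n \<in> {..<N}"
      then have "n < N" by simp
      then have "S + real n \<le> r" unfolding N_def using True by linarith
      then show "(if ereal (S + real n) \<le> y then 1 else (0::ennreal)) = 1" using real by simp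
    qed simp
    also have "\<dots> = ennreal (real N)" by (simp add: ennreal_of_nat_eq_real_of_nat)
    finally have sum: "(\<Sum>n. if ereal (S + real n) \<le> y then 1 else (0::ennreal)) = ennreal (real N)" .
    have rN: "r \<le> S + real N" unfolding N_def by linarith
    have "e2ennreal y = ennreal r" using real by (simp add: e2ennreal_ereal)
    also have "\<dots> \<le> ennreal (S + real N)" using rN by (rule ennreal_leI)
    also have "\<dots> = ennreal S + ennreal (real N)" using S by (simp add: ennreal_plus)
    finally show ?thesis using True real sum by simp
  qed
next
  case PInf
  then show ?thesis using sum_ones_top by simp
next
  case MInf
  then show ?thesis by simp
qed


lemma nn_tail_integral:
  fixes o' :: "'a::metric_space" and \<mu> :: "'a \<Rightarrow> (real \<Rightarrow> 'a) measure"
  assumes cat: "CAT_minus1 TYPE('a)" and geo: "geodesic_metric TYPE('a)"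
    and PS: "PS_density o' G \<mu>" and \<delta>: "0 < crit_exp o' G"
    and z: "z \<in> Xbar o'" and S: "0 \<le> S"
  shows "(\<integral>\<^sup>+\<xi>. e2ennreal (egprod o' (Inr \<xi>) z) * indicator {\<xi> \<in> rays o'. ereal S \<le> egprod o' (Inr \<xi>) z} \<xi> \<partial>\<mu> o')
     \<le> ennreal (exp (4 * crit_exp o' G - crit_exp o' G * S) * (S + 1 / (1 - exp (- crit_exp o' G))))"
proof -
  define d where "d = crit_exp o' G"
  have d: "0 < d" using \<delta> d_def by simp
  note sp = PS_unpack(2)[OF PS] and st = PS_unpack(3)[OF PS]
  define g where "g = (\<lambda>\<xi>. egprod o' (Inr \<xi>) z)"
  define A where "A = (\<lambda>t. {\<xi> \<in> rays o'. ereal t \<le> g \<xi>})"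
  have Am[measurable]: "A t \<in> sets (\<mu> o')" for t unfolding A_def g_def by (rule set_meas_ge[OF cat sp st z])
  have [measurable]: "g \<in> borel_measurable (\<mu> o')" unfolding g_def by (rule egprod_meas[OF cat sp st z])
  have TB: "emeasure (\<mu> o') (A t) \<le> ennreal (exp (4 * d - d * t))" if "0 \<le> t" for t
    unfolding A_def g_def d_def by (rule tail_bound[OF cat geo PS _ z that]) (use \<delta> in simp)
  have "(\<integral>\<^sup>+\<xi>. e2ennreal (g \<xi>) * indicator (A S) \<xi> \<partial>\<mu> o')
      \<le> (\<integral>\<^sup>+\<xi>. ennreal S * indicator (A S) \<xi> + (\<Sum>n. indicator (A (S + real n)) \<xi>) \<partial>\<mu> o')"
  proof (rule nn_integral_mono)
    fix \<xi> assume "\<xi> \<in> space (\<mu> o')"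
    then have \<xi>: "\<xi> \<in> rays o'" using sp by simp
    have ind: "indicator (A t) \<xi> = (if ereal t \<le> g \<xi> then 1 else (0::ennreal))" for t
      unfolding A_def using \<xi> by simp
    show "e2ennreal (g \<xi>) * indicator (A S) \<xi> \<le> ennreal S * indicator (A S) \<xi> + (\<Sum>n. indicator (A (S + real n)) \<xi>)"
      unfolding ind by (rule layer_cake_pt[OF S])
  qed
  also have "\<dots> = (\<integral>\<^sup>+\<xi>. ennreal S * indicator (A S) \<xi> \<partial>\<mu> o') + (\<integral>\<^sup>+\<xi>. (\<Sum>n. indicator (A (S + real n)) \<xi>) \<partial>\<mu> o')"
    by (rule nn_integral_add) measurable
  also have "(\<integral>\<^sup>+\<xi>. (\<Sum>n. indicator (A (S + real n)) \<xi>) \<partial>\<mu> o') = (\<Sum>n. emeasure (\<mu> o') (A (S + real n)))"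
    by (subst nn_integral_suminf) auto
  also have "(\<integral>\<^sup>+\<xi>. ennreal S * indicator (A S) \<xi> \<partial>\<mu> o') = ennreal S * emeasure (\<mu> o') (A S)"
    by (rule nn_integral_cmult_indicator[OF Am])
  also have "ennreal S * emeasure (\<mu> o') (A S) + (\<Sum>n. emeasure (\<mu> o') (A (S + real n)))
      \<le> ennreal S * ennreal (exp (4 * d - d * S)) + (\<Sum>n. ennreal (exp (4 * d - d * S) * exp (- d) ^ n))"
  proof (intro add_mono mult_left_mono suminf_le)
    show "emeasure (\<mu> o') (A S) \<le> ennreal (exp (4 * d - d * S))" by (rule TB[OF S])
    fix n :: nat
    have "exp (4 * d - d * (S + real n)) = exp (4 * d - d * S) * exp (real n * (- d))"
      by (simp add: mult_exp_exp algebra_simps)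
    also have "\<dots> = exp (4 * d - d * S) * exp (- d) ^ n" by (simp only: exp_of_nat_mult)
    finally have e: "exp (4 * d - d * (S + real n)) = exp (4 * d - d * S) * exp (- d) ^ n" .
    have "0 \<le> S + real n" using S by simp
    from TB[OF this] show "emeasure (\<mu> o') (A (S + real n)) \<le> ennreal (exp (4 * d - d * S) * exp (- d) ^ n)"
      unfolding e .
  qed auto
  also have "(\<Sum>n. ennreal (exp (4 * d - d * S) * exp (- d) ^ n)) = ennreal (exp (4 * d - d * S) * (1 / (1 - exp (- d))))"
  proof (rule suminf_ennreal_eq)
    have "norm (exp (- d)) < 1" using d by simp
    then show "(\<lambda>n. exp (4 * d - d * S) * exp (- d) ^ n) sums (exp (4 * d - d * S) * (1 / (1 - exp (- d))))"
      by (intro sums_mult geometric_sums)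
  qed simp
  also have "ennreal S * ennreal (exp (4 * d - d * S)) + ennreal (exp (4 * d - d * S) * (1 / (1 - exp (- d))))
      = ennreal (exp (4 * d - d * S) * (S + 1 / (1 - exp (- d))))"
  proof -
    define a where "a = exp (4 * d - d * S)"
    define c where "c = 1 / (1 - exp (- d))"
    have q: "0 \<le> c" using d unfolding c_def by simp
    have a: "0 \<le> a" unfolding a_def by simp
    have "ennreal S * ennreal a + ennreal (a * c) = ennreal (S * a) + ennreal (a * c)"
      using ennreal_mult[OF S a] by simp
    also have "\<dots> = ennreal (S * a + a * c)" using S a q by (simp only: ennreal_plus mult_nonneg_nonneg)
    also have "S * a + a * c = a * (S + c)" by (simp add: algebra_simps)
    finally show ?thesis unfolding a_def c_def .
  qed
  finally show ?thesis unfolding g_def A_def d_def .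
qed


definition xbar_basis :: "'a::metric_space \<Rightarrow> ('a + (real \<Rightarrow> 'a)) set set" where
  "xbar_basis o' = {Inl ` ball x r | x r. True} \<union>
      {{z \<in> Xbar o'. egprod o' z (Inr \<xi>) > ereal R} | \<xi> R. \<xi> \<in> rays o'}"

lemma xbar_top_eq: "Xbar_top o' = topology_generated_by (xbar_basis o')"
  unfolding Xbar_top_def xbar_basis_def ..

lemma xbar_basis_sub: "V \<in> xbar_basis o' \<Longrightarrow> V \<subseteq> Xbar o'"
  unfolding xbar_basis_def Xbar_def by auto

lemma xbar_topspace: "topspace (Xbar_top o') = Xbar o'"
proof -
  have "\<Union>(xbar_basis o') = Xbar o'"
  proof
    show "\<Union>(xbar_basis o') \<subseteq> Xbar o'" using xbar_basis_sub by blast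
    show "Xbar o' \<subseteq> \<Union>(xbar_basis o')"
    proof
      fix z assume z: "z \<in> Xbar o'"
      show "z \<in> \<Union>(xbar_basis o')"
      proof (cases z)
        case (Inl w)
        have "Inl ` ball w 1 \<in> xbar_basis o'" unfolding xbar_basis_def by blast
        moreover have "z \<in> Inl ` ball w 1" using Inl by simp
        ultimately show ?thesis by blast
      next
        case (Inr \<xi>)
        have \<xi>: "\<xi> \<in> rays o'" using z Inr unfolding Xbar_def by auto
        have "{z \<in> Xbar o'. egprod o' z (Inr \<xi>) > ereal 0} \<in> xbar_basis o'"
          unfolding xbar_basis_def using \<xi> by blast
        moreover have "z \<in> {z \<in> Xbar o'. egprod o' z (Inr \<xi>) > ereal 0}"
          using z Inr egprod_self[OF \<xi>] by simp
        ultimately show ?thesis by blast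
      qed
    qed
  qed
  then show ?thesis unfolding xbar_top_eq by simp
qed

lemma xbar_cont:
  fixes F :: "'a::metric_space + (real \<Rightarrow> 'a) \<Rightarrow> real"
  assumes "\<And>z \<epsilon>. z \<in> Xbar o' \<Longrightarrow> 0 < \<epsilon> \<Longrightarrow> \<exists>V. V \<in> xbar_basis o' \<and> z \<in> V \<and> (\<forall>y\<in>V. \<bar>F y - F z\<bar> < \<epsilon>)"
  shows "continuous_map (Xbar_top o') euclideanreal F"
  unfolding continuous_map_def
proof (intro conjI allI impI)
  show "F \<in> topspace (Xbar_top o') \<rightarrow> topspace euclideanreal" by simp
  fix U :: "real set" assume "openin euclideanreal U"
  then have U: "open U" by simp
  define P where "P = {x \<in> topspace (Xbar_top o'). F x \<in> U}"
  define K where "K = {V \<in> xbar_basis o'. V \<subseteq> P}"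
  have "P = \<Union>K"
  proof
    show "\<Union>K \<subseteq> P" unfolding K_def by auto
    show "P \<subseteq> \<Union>K"
    proof
      fix z assume zP: "z \<in> P"
      then have z: "z \<in> Xbar o'" "F z \<in> U" unfolding P_def xbar_topspace by auto
      obtain e where e: "0 < e" "ball (F z) e \<subseteq> U" using U z(2) open_contains_ball by blast
      obtain V where V: "V \<in> xbar_basis o'" "z \<in> V" "\<forall>y\<in>V. \<bar>F y - F z\<bar> < e"
        using assms[OF z(1) e(1)] by blast
      have "V \<subseteq> P"
      proof
        fix y assume y: "y \<in> V"
        then have "F y \<in> ball (F z) e" using V(3) by (simp add: dist_real_def abs_minus_commute)
        then show "y \<in> P" using e(2) y xbar_basis_sub[OF V(1)] unfolding P_def xbar_topspace by auto
      qed
      then show "z \<in> \<Union>K" using V unfolding K_def by blast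
    qed
  qed
  moreover have "generate_topology_on (xbar_basis o') (\<Union>K)"
    by (rule generate_topology_on.UN) (auto simp: K_def intro: generate_topology_on.Basis)
  ultimately have "openin (Xbar_top o') P"
    unfolding xbar_top_eq openin_topology_generated_by_iff by simp
  then show "openin (Xbar_top o') {x \<in> topspace (Xbar_top o'). F x \<in> U}" unfolding P_def .
qed

lemma egprod_nonneg_X:
  assumes "\<xi> \<in> rays o'" "z \<in> Xbar o'"
  shows "0 \<le> egprod o' (Inr \<xi>) z"
proof (cases z)
  case (Inl w) then show ?thesis using egprod_rl_bounds(1)[OF assms(1)] by simp
next
  case (Inr \<eta>)
  then have "\<eta> \<in> rays o'" using assms(2) unfolding Xbar_def by auto
  then show ?thesis using Inr egprod_rr_nonneg[OF assms(1)] by simp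
qed

lemma ennreal_roe_le: "ennreal (real_of_ereal y) \<le> e2ennreal y"
  by (cases y) (auto simp: e2ennreal_ereal)

lemma f_lip_l:
  assumes \<xi>: "\<xi> \<in> rays o'"
  shows "\<bar>real_of_ereal (egprod o' (Inr \<xi>) (Inl w)) - real_of_ereal (egprod o' (Inr \<xi>) (Inl w'))\<bar> \<le> dist w w'"
proof -
  have one: "real_of_ereal (egprod o' (Inr \<xi>) (Inl a)) \<le> real_of_ereal (egprod o' (Inr \<xi>) (Inl b)) + dist a b" for a b
  proof -
    have "egprod o' (Inr \<xi>) (Inl a) \<le> ereal (real_of_ereal (egprod o' (Inr \<xi>) (Inl b)) + dist a b)"
      unfolding egprod_rl[OF \<xi>, of a]
    proof (rule SUP_least)
      fix n :: nat
      have "gprod o' (\<xi> (real n)) a \<le> gprod o' (\<xi> (real n)) b + dist a b"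
        using gprod_lip2[of o' "\<xi> (real n)" a b] by simp
      moreover have "ereal (gprod o' (\<xi> (real n)) b) \<le> ereal (real_of_ereal (egprod o' (Inr \<xi>) (Inl b)))"
        using egprod_rl_ge[OF \<xi>, of "real n" b] egprod_rl_finite[OF \<xi>, of b] by simp
      ultimately show "ereal (gprod o' (\<xi> (real n)) a) \<le> ereal (real_of_ereal (egprod o' (Inr \<xi>) (Inl b)) + dist a b)"
        by simp
    qed
    then show ?thesis using egprod_rl_finite[OF \<xi>, of a] by (metis ereal_less_eq(3))
  qed
  show ?thesis using one[of w w'] one[of w' w] by (simp add: abs_le_iff dist_commute)
qed

lemma exp_small:
  assumes "0 < (d::real)" "0 < e" "0 \<le> C"
  shows "\<exists>M0. \<forall>M\<ge>M0. C * exp (- d * M) \<le> e"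
proof -
  define M0 where "M0 = ln ((C + 1) / e) / d"
  have pos: "0 < (C + 1) / e" using assms by simp
  show ?thesis
  proof (rule exI[of _ M0], intro allI impI)
    fix M assume M: "M0 \<le> M"
    have "- d * M \<le> - ln ((C + 1) / e)" using M assms(1) unfolding M0_def by (simp add: field_simps)
    then have "exp (- d * M) \<le> exp (- ln ((C + 1) / e))" by simp
    also have "\<dots> = e / (C + 1)" using pos by (simp add: exp_minus)
    finally have "C * exp (- d * M) \<le> C * (e / (C + 1))" using assms(3) by (rule mult_left_mono)
    also have "\<dots> \<le> e" using assms by (simp add: field_simps)
    finally show "C * exp (- d * M) \<le> e" .
  qed
qed

lemma tail_small:
  assumes d: "0 < (d::real)" and e: "0 < e"
  shows "\<exists>S0\<ge>0. \<forall>S\<ge>S0. exp (4 * d - d * S) * (S + 1 / (1 - exp (- d))) \<le> e"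
proof -
  define c1 where "c1 = 1 / (1 - exp (- d))"
  have c1: "0 \<le> c1" unfolding c1_def using d by simp
  obtain M0 where M0: "\<forall>M\<ge>M0. (exp (4*d) * (2/d + c1)) * exp (- (d/2) * M) \<le> e"
    using exp_small[of "d/2" e "exp (4*d) * (2/d + c1)"] d e c1 by auto
  show ?thesis
  proof (rule exI[of _ "max 0 M0"], intro conjI allI impI)
    fix S assume S: "max 0 M0 \<le> S"
    then have S0: "0 \<le> S" by simp
    have gx: "x \<le> exp x" for x :: real
    proof -
      have "1 + x \<le> exp x" by (rule exp_ge_add_one_self)
      then show ?thesis by linarith
    qed
    have h: "d * S / 2 \<le> exp (d * S / 2)" by (rule gx)
    have "S = 2 / d * (d * S / 2)" using d by (simp add: field_simps)
    also have "\<dots> \<le> 2 / d * exp (d * S / 2)" by (rule mult_left_mono[OF h]) (use d in simp)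
    finally have "S \<le> 2 / d * exp (d * S / 2)" .
    then have "S * exp (- d * S) \<le> 2 / d * exp (d * S / 2) * exp (- d * S)" by (intro mult_right_mono) auto
    also have "\<dots> = 2 / d * exp (- (d/2) * S)" by (simp add: mult.assoc mult_exp_exp[symmetric]) (simp add: mult_exp_exp field_simps)
    finally have SS: "S * exp (- d * S) \<le> 2 / d * exp (- (d/2) * S)" .
    have ee: "exp (- d * S) \<le> exp (- (d/2) * S)" using d S0 by (simp add: mult_right_mono)
    have e4: "exp (4 * d - d * S) = exp (4*d) * exp (- d * S)" by (simp add: mult_exp_exp)
    have "exp (4 * d - d * S) * (S + c1) = exp (4*d) * (S * exp (- d * S) + c1 * exp (- d * S))"
      unfolding e4 by (simp add: algebra_simps)
    also have "\<dots> \<le> exp (4*d) * (2 / d * exp (- (d/2) * S) + c1 * exp (- (d/2) * S))"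
      using SS ee c1 by (intro mult_left_mono add_mono) auto
    also have "\<dots> = (exp (4*d) * (2/d + c1)) * exp (- (d/2) * S)" by (simp add: algebra_simps)
    also have "\<dots> \<le> e" using M0 S by simp
    finally show "exp (4 * d - d * S) * (S + 1 / (1 - exp (- d))) \<le> e" unfolding c1_def .
  qed simp
qed


lemma cont_int:
  fixes o' :: "'a::metric_space" and \<mu> :: "'a \<Rightarrow> (real \<Rightarrow> 'a) measure"
  assumes cat: "CAT_minus1 TYPE('a)" and geo: "geodesic_metric TYPE('a)"
    and PS: "PS_density o' G \<mu>" and \<delta>: "0 < crit_exp o' G"
    and \<eta>: "\<eta> \<in> rays o'" and \<epsilon>: "0 < \<epsilon>"
  shows "\<exists>R. \<forall>y\<in>Xbar o'. ereal R < egprod o' y (Inr \<eta>) \<longrightarrow>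
     (\<integral>\<^sup>+\<xi>. ennreal \<bar>real_of_ereal (egprod o' (Inr \<xi>) y) - real_of_ereal (egprod o' (Inr \<xi>) (Inr \<eta>))\<bar> \<partial>\<mu> o') \<le> ennreal \<epsilon>"
proof -
  define d where "d = crit_exp o' G"
  have d: "0 < d" using \<delta> d_def by simp
  note sp = PS_unpack(2)[OF PS, of o'] and st = PS_unpack(3)[OF PS, of o'] and prob = PS_unpack(1)[OF PS, of o']
  define Tl where "Tl = (\<lambda>S. exp (4 * d - d * S) * (S + 1 / (1 - exp (- d))))"
  have e4: "0 < \<epsilon>/4" using \<epsilon> by simp
  obtain S1 where S1: "0 \<le> S1" "\<forall>S\<ge>S1. Tl S \<le> \<epsilon>/4" using tail_small[OF d e4] unfolding Tl_def by blast
  obtain M1 where M1: "\<forall>M\<ge>M1. (S1 * exp (4*d)) * exp (- d * M) \<le> \<epsilon>/4"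
    using exp_small[OF d e4, of "S1 * exp (4*d)"] S1 by auto
  obtain M2 where M2: "0 \<le> M2" "\<forall>S\<ge>M2. Tl S \<le> \<epsilon>/4" using tail_small[OF d e4] unfolding Tl_def by blast
  define M where "M = max (max M1 M2) 0"
  have M0: "0 \<le> M" unfolding M_def by simp
  obtain R where R: "\<forall>z\<in>Xbar o'. ereal R < egprod o' z (Inr \<eta>) \<longrightarrow>
           (\<forall>\<xi>\<in>rays o'. egprod o' (Inr \<xi>) (Inr \<eta>) \<le> ereal M \<longrightarrow>
              (\<exists>v. egprod o' (Inr \<xi>) z = ereal v \<and> \<bar>v - real_of_ereal (egprod o' (Inr \<xi>) (Inr \<eta>))\<bar> \<le> \<epsilon>/4))"
    using cont_est[OF cat geo \<eta> M0 e4] by blast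
  have \<eta>X: "Inr \<eta> \<in> Xbar o'" unfolding Xbar_def using \<eta> by simp
  show ?thesis
  proof (rule exI[of _ R], intro ballI impI)
    fix y assume y: "y \<in> Xbar o'" and yR: "ereal R < egprod o' y (Inr \<eta>)"
    define gy where "gy = (\<lambda>\<xi>. egprod o' (Inr \<xi>) y)"
    define ge where "ge = (\<lambda>\<xi>. egprod o' (Inr \<xi>) (Inr \<eta>))"
    define Ay where "Ay = {\<xi> \<in> rays o'. ereal S1 \<le> gy \<xi>}"
    define Ae where "Ae = {\<xi> \<in> rays o'. ereal M \<le> ge \<xi>}"
    have [measurable]: "gy \<in> borel_measurable (\<mu> o')" unfolding gy_def by (rule egprod_meas[OF cat sp st y])
    have [measurable]: "ge \<in> borel_measurable (\<mu> o')" unfolding ge_def by (rule egprod_meas[OF cat sp st \<eta>X])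
    have [measurable]: "Ay \<in> sets (\<mu> o')" unfolding Ay_def gy_def by (rule set_meas_ge[OF cat sp st y])
    have [measurable]: "Ae \<in> sets (\<mu> o')" unfolding Ae_def ge_def by (rule set_meas_ge[OF cat sp st \<eta>X])
    have "(\<integral>\<^sup>+\<xi>. ennreal \<bar>real_of_ereal (gy \<xi>) - real_of_ereal (ge \<xi>)\<bar> \<partial>\<mu> o')
      \<le> (\<integral>\<^sup>+\<xi>. ennreal (\<epsilon>/4) + e2ennreal (ge \<xi>) * indicator Ae \<xi> + ennreal S1 * indicator Ae \<xi>
              + e2ennreal (gy \<xi>) * indicator Ay \<xi> \<partial>\<mu> o')"
    proof (rule nn_integral_mono)
      fix \<xi> assume "\<xi> \<in> space (\<mu> o')"
      then have \<xi>: "\<xi> \<in> rays o'" using sp by simp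
      have gy0: "0 \<le> gy \<xi>" unfolding gy_def by (rule egprod_nonneg_X[OF \<xi> y])
      have ge0: "0 \<le> ge \<xi>" unfolding ge_def by (rule egprod_nonneg_X[OF \<xi> \<eta>X])
      show "ennreal \<bar>real_of_ereal (gy \<xi>) - real_of_ereal (ge \<xi>)\<bar>
        \<le> ennreal (\<epsilon>/4) + e2ennreal (ge \<xi>) * indicator Ae \<xi> + ennreal S1 * indicator Ae \<xi>
              + e2ennreal (gy \<xi>) * indicator Ay \<xi>"
      proof (cases "ge \<xi> \<le> ereal M")
        case True
        then obtain v where v: "gy \<xi> = ereal v" "\<bar>v - real_of_ereal (ge \<xi>)\<bar> \<le> \<epsilon>/4"
          using R y yR \<xi> unfolding gy_def ge_def by blast
        have "ennreal \<bar>real_of_ereal (gy \<xi>) - real_of_ereal (ge \<xi>)\<bar> \<le> ennreal (\<epsilon>/4)"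
          using v by (simp add: ennreal_leI)
        also have "\<dots> \<le> ennreal (\<epsilon>/4) + e2ennreal (ge \<xi>) * indicator Ae \<xi> + ennreal S1 * indicator Ae \<xi>
              + e2ennreal (gy \<xi>) * indicator Ay \<xi>" by (simp add: add.assoc)
        finally show ?thesis .
      next
        case False
        then have inAe: "\<xi> \<in> Ae" unfolding Ae_def using \<xi> by simp
        have fy0: "0 \<le> real_of_ereal (gy \<xi>)" using gy0 by (simp add: real_of_ereal_pos)
        have fe0: "0 \<le> real_of_ereal (ge \<xi>)" using ge0 by (simp add: real_of_ereal_pos)
        have "ennreal \<bar>real_of_ereal (gy \<xi>) - real_of_ereal (ge \<xi>)\<bar> \<le> ennreal (real_of_ereal (gy \<xi>) + real_of_ereal (ge \<xi>))"
          using fy0 fe0 by (intro ennreal_leI) auto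
        also have "\<dots> = ennreal (real_of_ereal (gy \<xi>)) + ennreal (real_of_ereal (ge \<xi>))" using fy0 fe0 by simp
        also have "ennreal (real_of_ereal (ge \<xi>)) \<le> e2ennreal (ge \<xi>) * indicator Ae \<xi>"
          using inAe ennreal_roe_le by simp
        also have "ennreal (real_of_ereal (gy \<xi>)) \<le> ennreal S1 * indicator Ae \<xi> + e2ennreal (gy \<xi>) * indicator Ay \<xi>"
        proof (cases "\<xi> \<in> Ay")
          case True then show ?thesis using ennreal_roe_le[of "gy \<xi>"] by (simp add: add_increasing)
        next
          case False
          then have "gy \<xi> < ereal S1" unfolding Ay_def using \<xi> by auto
          then have "real_of_ereal (gy \<xi>) \<le> S1" using gy0 by (cases "gy \<xi>") auto
          then show ?thesis using inAe False by (simp add: ennreal_leI)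
        qed
        finally have L: "ennreal \<bar>real_of_ereal (gy \<xi>) - real_of_ereal (ge \<xi>)\<bar> \<le>
            e2ennreal (ge \<xi>) * indicator Ae \<xi> + ennreal S1 * indicator Ae \<xi> + e2ennreal (gy \<xi>) * indicator Ay \<xi>"
          by (simp add: add_ac)
        have "ennreal \<bar>real_of_ereal (gy \<xi>) - real_of_ereal (ge \<xi>)\<bar> \<le> ennreal (\<epsilon>/4) +
            (e2ennreal (ge \<xi>) * indicator Ae \<xi> + ennreal S1 * indicator Ae \<xi> + e2ennreal (gy \<xi>) * indicator Ay \<xi>)"
          by (rule add_increasing[OF _ L]) simp
        then show ?thesis by (simp add: add.assoc)
      qed
    qed
    also have "\<dots> = (\<integral>\<^sup>+\<xi>. ennreal (\<epsilon>/4) \<partial>\<mu> o') + (\<integral>\<^sup>+\<xi>. e2ennreal (ge \<xi>) * indicator Ae \<xi> \<partial>\<mu> o')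
        + (\<integral>\<^sup>+\<xi>. ennreal S1 * indicator Ae \<xi> \<partial>\<mu> o') + (\<integral>\<^sup>+\<xi>. e2ennreal (gy \<xi>) * indicator Ay \<xi> \<partial>\<mu> o')"
      by (simp add: nn_integral_add)
    also have "(\<integral>\<^sup>+\<xi>. ennreal (\<epsilon>/4) \<partial>\<mu> o') = ennreal (\<epsilon>/4)"
      using prob_space.emeasure_space_1[OF prob] by simp
    also have "(\<integral>\<^sup>+\<xi>. e2ennreal (ge \<xi>) * indicator Ae \<xi> \<partial>\<mu> o') \<le> ennreal (Tl M)"
      unfolding ge_def Ae_def Tl_def d_def by (rule nn_tail_integral[OF cat geo PS \<delta> \<eta>X M0])
    also have "(\<integral>\<^sup>+\<xi>. ennreal S1 * indicator Ae \<xi> \<partial>\<mu> o') = ennreal S1 * emeasure (\<mu> o') Ae"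
      by (rule nn_integral_cmult_indicator) measurable
    also have "emeasure (\<mu> o') Ae \<le> ennreal (exp (4 * d - d * M))"
      unfolding Ae_def ge_def d_def by (rule tail_bound[OF cat geo PS _ \<eta>X M0]) (use \<delta> in simp)
    also have "(\<integral>\<^sup>+\<xi>. e2ennreal (gy \<xi>) * indicator Ay \<xi> \<partial>\<mu> o') \<le> ennreal (Tl S1)"
      unfolding gy_def Ay_def Tl_def d_def by (rule nn_tail_integral[OF cat geo PS \<delta> y S1(1)])
    finally have "(\<integral>\<^sup>+\<xi>. ennreal \<bar>real_of_ereal (gy \<xi>) - real_of_ereal (ge \<xi>)\<bar> \<partial>\<mu> o')
        \<le> ennreal (\<epsilon>/4) + ennreal (Tl M) + ennreal S1 * ennreal (exp (4 * d - d * M)) + ennreal (Tl S1)"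
      by (simp add: add_mono mult_left_mono)
    also have "\<dots> \<le> ennreal (\<epsilon>/4) + ennreal (\<epsilon>/4) + ennreal (\<epsilon>/4) + ennreal (\<epsilon>/4)"
    proof (intro add_mono order.refl)
      show "ennreal (Tl M) \<le> ennreal (\<epsilon>/4)" using M2 unfolding M_def by (intro ennreal_leI) auto
      show "ennreal (Tl S1) \<le> ennreal (\<epsilon>/4)" using S1 by (intro ennreal_leI) auto
      have "S1 * exp (4 * d - d * M) = (S1 * exp (4*d)) * exp (- d * M)" by (simp add: mult_exp_exp)
      also have "\<dots> \<le> \<epsilon>/4" using M1 unfolding M_def by auto
      finally show "ennreal S1 * ennreal (exp (4 * d - d * M)) \<le> ennreal (\<epsilon>/4)"
        using S1 by (simp add: ennreal_mult[symmetric] ennreal_leI)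
    qed
    also have "\<dots> = ennreal \<epsilon>" using \<epsilon> by (simp add: ennreal_plus[symmetric] del: ennreal_plus)
    finally show "(\<integral>\<^sup>+\<xi>. ennreal \<bar>real_of_ereal (egprod o' (Inr \<xi>) y) - real_of_ereal (egprod o' (Inr \<xi>) (Inr \<eta>))\<bar> \<partial>\<mu> o') \<le> ennreal \<epsilon>"
      unfolding gy_def ge_def .
  qed
qed


definition qseq :: "nat \<Rightarrow> real" where
  "qseq k = (case prod_decode k of (a, b) \<Rightarrow> real a / real (Suc b))"

lemma qseq_nonneg: "0 \<le> qseq k"
  unfolding qseq_def by (cases "prod_decode k") auto

lemma qseq_dense:
  assumes t: "0 \<le> t" and e: "0 < e"
  shows "\<exists>k. \<bar>t - qseq k\<bar> < e"
proof -
  obtain b :: nat where b: "inverse (real (Suc b)) < e" using reals_Archimedean[OF e] by blast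
  define a where "a = nat \<lfloor>t * real (Suc b)\<rfloor>"
  have a1: "real a \<le> t * real (Suc b)" unfolding a_def using t by (simp add: of_nat_nat)
  have a2: "t * real (Suc b) < real a + 1" unfolding a_def using t by linarith
  have q: "qseq (prod_encode (a, b)) = real a / real (Suc b)" unfolding qseq_def by simp
  define c where "c = real (Suc b)"
  have c: "0 < c" unfolding c_def by simp
  have l1: "real a / c \<le> t" using a1 c unfolding c_def[symmetric] by (simp add: divide_le_eq)
  have "t < (real a + 1) / c" using a2 c unfolding c_def[symmetric] by (simp add: less_divide_eq)
  also have "\<dots> = real a / c + 1 / c" by (simp add: add_divide_distrib)
  finally have l2: "t - real a / c < 1 / c" by simp
  have "\<bar>t - real a / real (Suc b)\<bar> < inverse (real (Suc b))"
    using l1 l2 unfolding c_def[symmetric] by (simp add: inverse_eq_divide)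
  then show ?thesis using b q by (intro exI[of _ "prod_encode (a, b)"]) simp
qed

lemma ray_in_cball:
  assumes "r \<in> rays o'"
  shows "r t \<in> cball o' \<bar>t\<bar>"
proof (cases "0 \<le> t")
  case True then show ?thesis using ray_dist0[OF assms True] by simp
next
  case False then have "r t = o'" using assms unfolding rays_def by auto
  then show ?thesis by simp
qed

lemma ray_subseq:
  fixes o' :: "'a::metric_space"
  fixes xs :: "nat \<Rightarrow> real \<Rightarrow> 'a"
  assumes proper: "proper_metric TYPE('a)" and xs: "\<And>n. xs n \<in> rays o'"
  shows "\<exists>r \<xi>. strict_mono r \<and> \<xi> \<in> rays o' \<and> (\<forall>t. (\<lambda>n. xs (r n) t) \<longlonglongrightarrow> \<xi> t)"
proof -
  have cpt: "compact (cball o' R)" for R using proper unfolding proper_metric_def by blast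
  define P where "P = (\<lambda>k (s :: nat \<Rightarrow> nat). convergent (\<lambda>n. xs (s n) (qseq k)))"
  have ex: "\<exists>r'. strict_mono r' \<and> P k (s \<circ> r')" if "strict_mono s" for k and s :: "nat \<Rightarrow> nat"
  proof -
    have inS: "\<forall>n. xs (s n) (qseq k) \<in> cball o' \<bar>qseq k\<bar>" using ray_in_cball[OF xs] by blast
    obtain l r' where "l \<in> cball o' \<bar>qseq k\<bar>" "strict_mono r'" "((\<lambda>n. xs (s n) (qseq k)) \<circ> r') \<longlonglongrightarrow> l"
      by (rule seq_compactE[OF compact_imp_seq_compact[OF cpt[of "\<bar>qseq k\<bar>"]], of "\<lambda>n. xs (s n) (qseq k)", OF inS])
    then show ?thesis unfolding P_def by (intro exI[of _ r'] conjI) (auto simp: convergent_def o_def)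
  qed
  interpret subseqs P using ex by unfold_locales
  have stable: "P k (s \<circ> r)" if "strict_mono r" "P k s" for r s :: "nat \<Rightarrow> nat" and k
    using convergent_subseq_convergent[of "\<lambda>n. xs (s n) (qseq k)" r] that unfolding P_def by (simp add: o_def)
  have conv: "convergent (\<lambda>n. xs (diagseq n) (qseq k))" for k
  proof -
    have "P k (diagseq \<circ> (+) (Suc k))" by (rule diagseq_holds) (rule stable)
    then have "convergent (\<lambda>n. xs (diagseq (n + Suc k)) (qseq k))" unfolding P_def by (simp add: o_def add.commute)
    then show ?thesis by (rule convergent_ignore_initial_segment[THEN iffD1])
  qed
  define r where "r = diagseq"
  have cauchy: "Cauchy (\<lambda>n. xs (r n) t)" for t
  proof (cases "0 \<le> t")
    case False
    then have "xs (r n) t = o'" for n using xs[of "r n"] unfolding rays_def by auto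
    then show ?thesis by (intro metric_CauchyI) auto
  next
    case True
    show ?thesis
    proof (rule metric_CauchyI)
      fix e :: real assume e: "0 < e"
      have e3: "0 < e/3" using e by simp
      obtain k where k: "\<bar>t - qseq k\<bar> < e/3" using qseq_dense[OF True e3] by blast
      obtain N where N: "\<forall>m\<ge>N. \<forall>n\<ge>N. dist (xs (r m) (qseq k)) (xs (r n) (qseq k)) < e/3"
        using metric_CauchyD[OF convergent_Cauchy[OF conv[of k]], of "e/3"] e unfolding r_def by auto
      show "\<exists>M. \<forall>m\<ge>M. \<forall>n\<ge>M. dist (xs (r m) t) (xs (r n) t) < e"
      proof (intro exI[of _ N] allI impI)
        fix m n assume mn: "N \<le> m" "N \<le> n"
        have d1: "dist (xs (r m) t) (xs (r m) (qseq k)) = \<bar>t - qseq k\<bar>"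
          using ray_dist[OF xs True qseq_nonneg] .
        have d2: "dist (xs (r n) (qseq k)) (xs (r n) t) = \<bar>t - qseq k\<bar>"
          using ray_dist[OF xs qseq_nonneg True] by (simp add: abs_minus_commute)
        have "dist (xs (r m) t) (xs (r n) t) \<le> dist (xs (r m) t) (xs (r m) (qseq k)) + dist (xs (r m) (qseq k)) (xs (r n) t)"
          by (rule dist_triangle)
        also have "\<dots> \<le> dist (xs (r m) t) (xs (r m) (qseq k)) + (dist (xs (r m) (qseq k)) (xs (r n) (qseq k)) + dist (xs (r n) (qseq k)) (xs (r n) t))"
          by (rule add_left_mono[OF dist_triangle])
        also have "\<dots> < e/3 + (e/3 + e/3)" unfolding d1 d2 using k N mn by (intro add_strict_mono) auto
        finally show "dist (xs (r m) t) (xs (r n) t) < e" by simp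
      qed
    qed
  qed
  have lim: "\<exists>l. (\<lambda>n. xs (r n) t) \<longlonglongrightarrow> l" for t
  proof -
    have cm: "Topological_Spaces.complete (cball o' \<bar>t\<bar>)" by (rule compact_imp_complete[OF cpt])
    have inS: "\<forall>n. xs (r n) t \<in> cball o' \<bar>t\<bar>" using ray_in_cball[OF xs] by blast
    obtain l where "l \<in> cball o' \<bar>t\<bar>" "(\<lambda>n. xs (r n) t) \<longlonglongrightarrow> l"
      by (rule completeE[OF cm inS cauchy])
    then show ?thesis by blast
  qed
  define \<xi> where "\<xi> t = lim (\<lambda>n. xs (r n) t)" for t
  have tl: "(\<lambda>n. xs (r n) t) \<longlonglongrightarrow> \<xi> t" for t
    unfolding \<xi>_def using lim[of t] by (simp add: convergent_LIMSEQ_iff[symmetric] convergent_def)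
  have \<xi>r: "\<xi> \<in> rays o'"
    unfolding rays_def
  proof (intro CollectI conjI allI impI)
    fix t :: real assume "t \<le> 0"
    then have "xs (r n) t = o'" for n using xs[of "r n"] unfolding rays_def by auto
    then have "(\<lambda>n. xs (r n) t) \<longlonglongrightarrow> o'" by simp
    then show "\<xi> t = o'" by (rule LIMSEQ_unique[OF tl])
  next
    fix s t :: real assume st: "0 \<le> s" "0 \<le> t"
    have "(\<lambda>n. dist (xs (r n) s) (xs (r n) t)) \<longlonglongrightarrow> dist (\<xi> s) (\<xi> t)" by (intro tendsto_dist tl)
    moreover have "(\<lambda>n. dist (xs (r n) s) (xs (r n) t)) = (\<lambda>n. \<bar>s - t\<bar>)" using ray_dist[OF xs st] by simp
    ultimately have "(\<lambda>n. \<bar>s - t\<bar>) \<longlonglongrightarrow> dist (\<xi> s) (\<xi> t)" by simp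
    then show "dist (\<xi> s) (\<xi> t) = \<bar>s - t\<bar>" by (rule LIMSEQ_unique[OF tendsto_const, symmetric])
  qed
  have "strict_mono r" unfolding r_def by (rule subseq_diagseq)
  then show ?thesis using \<xi>r tl by blast
qed

lemma bd_seq_conv:
  fixes o' :: "'a::metric_space" and xs :: "nat \<Rightarrow> real \<Rightarrow> 'a"
  assumes xs: "\<And>n. xs n \<in> rays o'" and \<xi>: "\<xi> \<in> rays o'" and tl: "\<And>t. (\<lambda>n. xs n t) \<longlonglongrightarrow> \<xi> t"
    and U: "openin (bd_top o') U" and \<xi>U: "\<xi> \<in> U"
  shows "eventually (\<lambda>n. xs n \<in> U) sequentially"
proof -
  have "generate_topology_on (bd_basis o') U" using U unfolding bd_top_eq openin_topology_generated_by_iff .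
  then have "\<xi> \<in> U \<longrightarrow> eventually (\<lambda>n. xs n \<in> U) sequentially"
  proof (induction rule: generate_topology_on.induct)
    case Empty then show ?case by simp
  next
    case (Int a b) then show ?case by (auto intro: eventually_conj)
  next
    case (UN K)
    show ?case
    proof
      assume "\<xi> \<in> \<Union>K"
      then obtain k where k: "k \<in> K" "\<xi> \<in> k" by blast
      then have "eventually (\<lambda>n. xs n \<in> k) sequentially" using UN.IH by blast
      then show "eventually (\<lambda>n. xs n \<in> \<Union>K) sequentially" by (rule eventually_mono) (use k in blast)
    qed
  next
    case (Basis s)
    then obtain \<zeta> R where s: "s = {\<eta> \<in> rays o'. ereal R < egprod o' (Inr \<eta>) (Inr \<zeta>)}" and \<zeta>: "\<zeta> \<in> rays o'"
      unfolding bd_basis_def by blast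
    show ?case
    proof
      assume "\<xi> \<in> s"
      then have "ereal R < egprod o' (Inr \<xi>) (Inr \<zeta>)" using s by simp
      then obtain k :: nat where k: "R < gprod o' (\<xi> (real k)) (\<zeta> (real k))"
        unfolding egprod_rr[OF \<xi> \<zeta>] by (auto simp: less_SUP_iff)
      have "(\<lambda>n. gprod o' (xs n (real k)) (\<zeta> (real k))) \<longlonglongrightarrow> gprod o' (\<xi> (real k)) (\<zeta> (real k))"
        unfolding gprod_def by (intro tendsto_intros tl) simp
      then have "eventually (\<lambda>n. R < gprod o' (xs n (real k)) (\<zeta> (real k))) sequentially"
        using k by (rule order_tendstoD)
      then show "eventually (\<lambda>n. xs n \<in> s) sequentially"
      proof (rule eventually_mono)
        fix n assume h: "R < gprod o' (xs n (real k)) (\<zeta> (real k))"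
        have "ereal R < ereal (gprod o' (xs n (real k)) (\<zeta> (real k)))" using h by simp
        also have "\<dots> \<le> egprod o' (Inr (xs n)) (Inr \<zeta>)" by (rule egprod_rr_ge[OF xs \<zeta>]) simp
        finally show "xs n \<in> s" using s xs by simp
      qed
    qed
  qed
  then show ?thesis using \<xi>U by blast
qed

lemma phi_bounded:
  fixes o' :: "'a::metric_space" and \<phi> :: "(real \<Rightarrow> 'a) \<Rightarrow> real"
  assumes proper: "proper_metric TYPE('a)" and \<phi>c: "continuous_map (bd_top o') euclideanreal \<phi>"
  shows "\<exists>B. \<forall>\<xi>\<in>rays o'. \<bar>\<phi> \<xi>\<bar> \<le> B"
proof (rule ccontr)
  assume "\<not> ?thesis"
  then have "\<forall>n::nat. \<exists>\<xi>. \<xi> \<in> rays o' \<and> real n < \<bar>\<phi> \<xi>\<bar>" by (auto simp: not_le)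
  then have "\<exists>xs. \<forall>n. xs n \<in> rays o' \<and> real n < \<bar>\<phi> (xs n)\<bar>" by (rule choice)
  then obtain xs where "\<forall>n. xs n \<in> rays o' \<and> real n < \<bar>\<phi> (xs n)\<bar>" by (elim exE)
  then have xs: "\<And>n. xs n \<in> rays o'" and big: "\<And>n. real n < \<bar>\<phi> (xs n)\<bar>" by auto
  obtain r \<xi> where r: "strict_mono r" and \<xi>: "\<xi> \<in> rays o'" and tl: "\<And>t. (\<lambda>n. xs (r n) t) \<longlonglongrightarrow> \<xi> t"
    using ray_subseq[of xs, OF proper xs] by blast
  define U where "U = {\<eta> \<in> topspace (bd_top o'). \<phi> \<eta> \<in> ball (\<phi> \<xi>) 1}"
  have U: "openin (bd_top o') U" unfolding U_def by (rule openin_continuous_map_preimage[OF \<phi>c]) simp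
  have \<xi>U: "\<xi> \<in> U" unfolding U_def topspace_bd using \<xi> by simp
  have "eventually (\<lambda>n. xs (r n) \<in> U) sequentially" by (rule bd_seq_conv[OF xs \<xi> tl U \<xi>U])
  moreover have "eventually (\<lambda>n. \<bar>\<phi> \<xi>\<bar> + 1 \<le> real n) sequentially"
    using eventually_ge_at_top[of "nat \<lceil>\<bar>\<phi> \<xi>\<bar> + 1\<rceil>"] by (rule eventually_mono) linarith
  ultimately have "eventually (\<lambda>n. xs (r n) \<in> U \<and> \<bar>\<phi> \<xi>\<bar> + 1 \<le> real n) sequentially" by (rule eventually_conj)
  then obtain N where "\<forall>n\<ge>N. xs (r n) \<in> U \<and> \<bar>\<phi> \<xi>\<bar> + 1 \<le> real n"
    unfolding eventually_sequentially by (elim exE)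
  then have n: "xs (r N) \<in> U" "\<bar>\<phi> \<xi>\<bar> + 1 \<le> real N" by auto
  have "\<bar>\<phi> (xs (r N)) - \<phi> \<xi>\<bar> < 1" using n(1) unfolding U_def by (simp add: dist_real_def abs_minus_commute)
  moreover have "real N \<le> real (r N)" using seq_suble[OF r] by simp
  ultimately show False using big[of "r N"] n(2) by linarith
qed


theorem lemma3p3:
  fixes o' :: "'a::metric_space" and G :: "('a \<Rightarrow> 'a) set"
    and \<mu> :: "'a \<Rightarrow> (real \<Rightarrow> 'a) measure"
  assumes "proper_metric TYPE('a)" and "geodesic_metric TYPE('a)" and "CAT_minus1 TYPE('a)"
    and "isometry_group G" and "discrete_group G" and "non_elementary o' G"
    and "convex_cocompact o' G"
    and "0 < crit_exp o' G"
    and "PS_density o' G \<mu>"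
    and "o' \<in> hull_Q o' G"
  shows "\<exists>C. \<forall>\<phi>. continuous_map (bd_top o') euclideanreal \<phi> \<longrightarrow>
           (\<forall>z\<in>Xbar o'. (\<integral>\<^sup>+\<xi>. ennreal \<bar>\<phi> \<xi>\<bar> * e2ennreal (egprod o' (Inr \<xi>) z) \<partial>\<mu> o') < \<infinity>)
         \<and> continuous_map (Xbar_top o') euclideanreal (Iprime o' \<mu> \<phi>)
         \<and> (\<forall>z\<in>Xbar o'. \<bar>Iprime o' \<mu> \<phi> z\<bar> \<le> C * (SUP \<xi>\<in>rays o'. \<bar>\<phi> \<xi>\<bar>))"
proof -
  note proper = assms(1) and geo = assms(2) and cat = assms(3) and PS = assms(9) and \<delta> = assms(8)
  define d where "d = crit_exp o' G"
  have d: "0 < d" using \<delta> d_def by simp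
  note sp = PS_unpack(2)[OF PS, of o'] and st = PS_unpack(3)[OF PS, of o'] and prob = PS_unpack(1)[OF PS, of o']
  define K where "K = exp (4 * d - d * 0) * (0 + 1 / (1 - exp (- d)))"
  have K0: "0 \<le> K" unfolding K_def using d by simp
  define g where "g = (\<lambda>z \<xi>. egprod o' (Inr \<xi>) z)"
  define f where "f = (\<lambda>z \<xi>. real_of_ereal (egprod o' (Inr \<xi>) z))"
  have gm[measurable]: "g z \<in> borel_measurable (\<mu> o')" if "z \<in> Xbar o'" for z
    unfolding g_def by (rule egprod_meas[OF cat sp st that])
  have fm[measurable]: "f z \<in> borel_measurable (\<mu> o')" if "z \<in> Xbar o'" for z
    using gm[OF that] unfolding f_def g_def by measurable
  have intg: "(\<integral>\<^sup>+\<xi>. e2ennreal (g z \<xi>) \<partial>\<mu> o') \<le> ennreal K" if z: "z \<in> Xbar o'" for z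
  proof -
    have "(\<integral>\<^sup>+\<xi>. e2ennreal (g z \<xi>) \<partial>\<mu> o') = (\<integral>\<^sup>+\<xi>. e2ennreal (egprod o' (Inr \<xi>) z) * indicator {\<xi> \<in> rays o'. ereal 0 \<le> egprod o' (Inr \<xi>) z} \<xi> \<partial>\<mu> o')"
    proof (rule nn_integral_cong)
      fix \<xi> assume "\<xi> \<in> space (\<mu> o')"
      then have \<xi>: "\<xi> \<in> rays o'" using sp by simp
      have "ereal 0 \<le> egprod o' (Inr \<xi>) z" using egprod_nonneg_X[OF \<xi> z] by (simp add: zero_ereal_def)
      then have "indicator {\<xi> \<in> rays o'. ereal 0 \<le> egprod o' (Inr \<xi>) z} \<xi> = (1::ennreal)"
        using \<xi> by (simp add: indicator_def)
      then show "e2ennreal (g z \<xi>) = e2ennreal (egprod o' (Inr \<xi>) z) * indicator {\<xi> \<in> rays o'. ereal 0 \<le> egprod o' (Inr \<xi>) z} \<xi>"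
        by (simp add: g_def)
    qed
    also have "\<dots> \<le> ennreal K" unfolding K_def d_def by (rule nn_tail_integral[OF cat geo PS \<delta> z]) simp
    finally show ?thesis .
  qed
  have rays_ne: "rays o' \<noteq> {}"
  proof -
    have "infinite (limit_set o' G)" using assms(6) unfolding non_elementary_def .
    then obtain \<xi> where "\<xi> \<in> limit_set o' G" by (metis finite.emptyI equals0I)
    then show ?thesis unfolding limit_set_def by auto
  qed
  show ?thesis
  proof (rule exI[of _ K], intro allI impI)
    fix \<phi> :: "(real \<Rightarrow> 'a) \<Rightarrow> real" assume \<phi>c: "continuous_map (bd_top o') euclideanreal \<phi>"
    obtain B0 where B0: "\<forall>\<xi>\<in>rays o'. \<bar>\<phi> \<xi>\<bar> \<le> B0" using phi_bounded[OF proper \<phi>c] by blast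
    define B where "B = (SUP \<xi>\<in>rays o'. \<bar>\<phi> \<xi>\<bar>)"
    have \<phi>B: "\<bar>\<phi> \<xi>\<bar> \<le> B" if "\<xi> \<in> rays o'" for \<xi>
      unfolding B_def by (rule cSUP_upper[OF that]) (use B0 in \<open>auto intro: bdd_aboveI2\<close>)
    have B0': "0 \<le> B" using rays_ne \<phi>B by (meson abs_ge_zero all_not_in_conv order_trans)
    have \<phi>m[measurable]: "\<phi> \<in> borel_measurable (\<mu> o')"
    proof (rule bd_measurable[OF sp st])
      fix U :: "real set" assume "open U"
      then have "openin (bd_top o') {x \<in> topspace (bd_top o'). \<phi> x \<in> U}"
        using openin_continuous_map_preimage[OF \<phi>c] by simp
      then show "openin (bd_top o') {\<xi> \<in> rays o'. \<phi> \<xi> \<in> U}" unfolding topspace_bd .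
    qed
    have nnA: "(\<integral>\<^sup>+\<xi>. ennreal \<bar>\<phi> \<xi>\<bar> * e2ennreal (g z \<xi>) \<partial>\<mu> o') \<le> ennreal (B * K)" if z: "z \<in> Xbar o'" for z
    proof -
      have "(\<integral>\<^sup>+\<xi>. ennreal \<bar>\<phi> \<xi>\<bar> * e2ennreal (g z \<xi>) \<partial>\<mu> o') \<le> (\<integral>\<^sup>+\<xi>. ennreal B * e2ennreal (g z \<xi>) \<partial>\<mu> o')"
        by (rule nn_integral_mono) (use sp \<phi>B in \<open>auto intro!: mult_right_mono ennreal_leI\<close>)
      also have "\<dots> = ennreal B * (\<integral>\<^sup>+\<xi>. e2ennreal (g z \<xi>) \<partial>\<mu> o')"
        by (rule nn_integral_cmult) (use z in measurable)
      also have "\<dots> \<le> ennreal B * ennreal K" using intg[OF z] by (rule mult_left_mono) simp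
      also have "\<dots> = ennreal (B * K)" using B0' K0 by (simp add: ennreal_mult)
      finally show ?thesis .
    qed
    have normle: "(\<integral>\<^sup>+\<xi>. ennreal (norm (\<phi> \<xi> * f z \<xi>)) \<partial>\<mu> o') \<le> ennreal (B * K)" if z: "z \<in> Xbar o'" for z
    proof -
      have "(\<integral>\<^sup>+\<xi>. ennreal (norm (\<phi> \<xi> * f z \<xi>)) \<partial>\<mu> o') \<le> (\<integral>\<^sup>+\<xi>. ennreal \<bar>\<phi> \<xi>\<bar> * e2ennreal (g z \<xi>) \<partial>\<mu> o')"
      proof (rule nn_integral_mono)
        fix \<xi> assume "\<xi> \<in> space (\<mu> o')"
        then have \<xi>: "\<xi> \<in> rays o'" using sp by simp
        have f0: "0 \<le> f z \<xi>" unfolding f_def using egprod_nonneg_X[OF \<xi> z] by (simp add: real_of_ereal_pos)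
        have "ennreal (norm (\<phi> \<xi> * f z \<xi>)) = ennreal \<bar>\<phi> \<xi>\<bar> * ennreal (f z \<xi>)"
          using f0 by (simp add: abs_mult ennreal_mult)
        also have "\<dots> \<le> ennreal \<bar>\<phi> \<xi>\<bar> * e2ennreal (g z \<xi>)"
          unfolding f_def g_def by (intro mult_left_mono ennreal_roe_le) simp
        finally show "ennreal (norm (\<phi> \<xi> * f z \<xi>)) \<le> ennreal \<bar>\<phi> \<xi>\<bar> * e2ennreal (g z \<xi>)" .
      qed
      also have "\<dots> \<le> ennreal (B * K)" by (rule nnA[OF z])
      finally show ?thesis .
    qed
    have integ: "integrable (\<mu> o') (\<lambda>\<xi>. \<phi> \<xi> * f z \<xi>)" if z: "z \<in> Xbar o'" for z
    proof (rule integrableI_bounded)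
      show "(\<lambda>\<xi>. \<phi> \<xi> * f z \<xi>) \<in> borel_measurable (\<mu> o')" using z by measurable
      show "(\<integral>\<^sup>+\<xi>. ennreal (norm (\<phi> \<xi> * f z \<xi>)) \<partial>\<mu> o') < \<infinity>"
        using le_less_trans[OF normle[OF z] ennreal_less_top] by simp
    qed
    have Ieq: "Iprime o' \<mu> \<phi> z = (\<integral>\<xi>. \<phi> \<xi> * f z \<xi> \<partial>\<mu> o')" for z unfolding Iprime_def f_def ..
    have diffle: "ennreal \<bar>Iprime o' \<mu> \<phi> y - Iprime o' \<mu> \<phi> z\<bar> \<le> ennreal B * (\<integral>\<^sup>+\<xi>. ennreal \<bar>f y \<xi> - f z \<xi>\<bar> \<partial>\<mu> o')"
      if y: "y \<in> Xbar o'" and z: "z \<in> Xbar o'" for y z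
    proof -
      have "Iprime o' \<mu> \<phi> y - Iprime o' \<mu> \<phi> z = (\<integral>\<xi>. \<phi> \<xi> * f y \<xi> - \<phi> \<xi> * f z \<xi> \<partial>\<mu> o')"
        unfolding Ieq using integ[OF y] integ[OF z] by simp
      then have "ennreal \<bar>Iprime o' \<mu> \<phi> y - Iprime o' \<mu> \<phi> z\<bar> \<le> (\<integral>\<^sup>+\<xi>. ennreal (norm (\<phi> \<xi> * f y \<xi> - \<phi> \<xi> * f z \<xi>)) \<partial>\<mu> o')"
        using integral_norm_bound_ennreal[OF Bochner_Integration.integrable_diff[OF integ[OF y] integ[OF z]]] by simp
      also have "\<dots> \<le> (\<integral>\<^sup>+\<xi>. ennreal B * ennreal \<bar>f y \<xi> - f z \<xi>\<bar> \<partial>\<mu> o')"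
      proof (rule nn_integral_mono)
        fix \<xi> assume "\<xi> \<in> space (\<mu> o')"
        then have \<xi>: "\<xi> \<in> rays o'" using sp by simp
        have "norm (\<phi> \<xi> * f y \<xi> - \<phi> \<xi> * f z \<xi>) = \<bar>\<phi> \<xi>\<bar> * \<bar>f y \<xi> - f z \<xi>\<bar>"
          by (simp add: abs_mult right_diff_distrib[symmetric])
        also have "\<dots> \<le> B * \<bar>f y \<xi> - f z \<xi>\<bar>" using \<phi>B[OF \<xi>] by (intro mult_right_mono) auto
        finally show "ennreal (norm (\<phi> \<xi> * f y \<xi> - \<phi> \<xi> * f z \<xi>)) \<le> ennreal B * ennreal \<bar>f y \<xi> - f z \<xi>\<bar>"
          using B0' by (simp add: ennreal_mult[symmetric] ennreal_leI)
      qed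
      also have "\<dots> = ennreal B * (\<integral>\<^sup>+\<xi>. ennreal \<bar>f y \<xi> - f z \<xi>\<bar> \<partial>\<mu> o')"
        by (rule nn_integral_cmult) (use y z in measurable)
      finally show ?thesis .
    qed
    have small: "\<bar>Iprime o' \<mu> \<phi> y - Iprime o' \<mu> \<phi> z\<bar> < \<epsilon>"
      if y: "y \<in> Xbar o'" and z: "z \<in> Xbar o'" and \<epsilon>: "0 < \<epsilon>"
        and int: "(\<integral>\<^sup>+\<xi>. ennreal \<bar>f y \<xi> - f z \<xi>\<bar> \<partial>\<mu> o') \<le> ennreal (\<epsilon> / (2 * (B + 1)))" for y z \<epsilon>
    proof -
      have "ennreal \<bar>Iprime o' \<mu> \<phi> y - Iprime o' \<mu> \<phi> z\<bar> \<le> ennreal B * ennreal (\<epsilon> / (2 * (B + 1)))"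
        using diffle[OF y z] int by (meson mult_left_mono order_trans zero_le)
      also have "\<dots> = ennreal (B * (\<epsilon> / (2 * (B + 1))))" using B0' \<epsilon> by (subst ennreal_mult) auto
      finally have "\<bar>Iprime o' \<mu> \<phi> y - Iprime o' \<mu> \<phi> z\<bar> \<le> B * (\<epsilon> / (2 * (B + 1)))"
        using B0' \<epsilon> by (simp add: ennreal_le_iff)
      also have "B * (\<epsilon> / (2 * (B + 1))) < \<epsilon>"
      proof -
        have "0 \<le> B * \<epsilon>" using B0' \<epsilon> by simp
        then have "0 < B * \<epsilon> + \<epsilon> * 2" using \<epsilon> by (simp add: add_nonneg_pos)
        then show ?thesis using B0' \<epsilon> by (simp add: field_simps)
      qed
      finally show ?thesis .
    qed
    show "(\<forall>z\<in>Xbar o'. (\<integral>\<^sup>+\<xi>. ennreal \<bar>\<phi> \<xi>\<bar> * e2ennreal (egprod o' (Inr \<xi>) z) \<partial>\<mu> o') < \<infinity>)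
         \<and> continuous_map (Xbar_top o') euclideanreal (Iprime o' \<mu> \<phi>)
         \<and> (\<forall>z\<in>Xbar o'. \<bar>Iprime o' \<mu> \<phi> z\<bar> \<le> K * (SUP \<xi>\<in>rays o'. \<bar>\<phi> \<xi>\<bar>))"
    proof (intro conjI ballI)
      fix z assume z: "z \<in> Xbar o'"
      show "(\<integral>\<^sup>+\<xi>. ennreal \<bar>\<phi> \<xi>\<bar> * e2ennreal (egprod o' (Inr \<xi>) z) \<partial>\<mu> o') < \<infinity>"
        using nnA[OF z] unfolding g_def by (simp add: le_less_trans)
    next
      fix z assume z: "z \<in> Xbar o'"
      have "ennreal \<bar>Iprime o' \<mu> \<phi> z\<bar> \<le> (\<integral>\<^sup>+\<xi>. ennreal (norm (\<phi> \<xi> * f z \<xi>)) \<partial>\<mu> o')"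
        unfolding Ieq using integral_norm_bound_ennreal[OF integ[OF z]] by simp
      also have "\<dots> \<le> ennreal (B * K)" by (rule normle[OF z])
      finally have "\<bar>Iprime o' \<mu> \<phi> z\<bar> \<le> B * K" using B0' K0 by (simp add: ennreal_le_iff)
      then show "\<bar>Iprime o' \<mu> \<phi> z\<bar> \<le> K * (SUP \<xi>\<in>rays o'. \<bar>\<phi> \<xi>\<bar>)" unfolding B_def by (simp add: mult.commute)
    next
      show "continuous_map (Xbar_top o') euclideanreal (Iprime o' \<mu> \<phi>)"
      proof (rule xbar_cont)
        fix z and \<epsilon> :: real assume z: "z \<in> Xbar o'" and \<epsilon>: "0 < \<epsilon>"
        define e where "e = \<epsilon> / (2 * (B + 1))"
        have e: "0 < e" unfolding e_def using \<epsilon> B0' by simp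
        show "\<exists>V. V \<in> xbar_basis o' \<and> z \<in> V \<and> (\<forall>y\<in>V. \<bar>Iprime o' \<mu> \<phi> y - Iprime o' \<mu> \<phi> z\<bar> < \<epsilon>)"
        proof (cases z)
          case (Inl w)
          show ?thesis
          proof (rule exI[of _ "Inl ` ball w e"], intro conjI ballI)
            show "Inl ` ball w e \<in> xbar_basis o'" unfolding xbar_basis_def by blast
            show "z \<in> Inl ` ball w e" using Inl e by simp
            fix y :: "'a + (real \<Rightarrow> 'a)" assume "y \<in> Inl ` ball w e"
            then obtain w' where w': "y = Inl w'" "dist w w' < e" by auto
            have yX: "y \<in> Xbar o'" unfolding Xbar_def w' by simp
            have "(\<integral>\<^sup>+\<xi>. ennreal \<bar>f y \<xi> - f z \<xi>\<bar> \<partial>\<mu> o') \<le> (\<integral>\<^sup>+\<xi>. ennreal e \<partial>\<mu> o')"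
            proof (rule nn_integral_mono)
              fix \<xi> assume "\<xi> \<in> space (\<mu> o')"
              then have \<xi>: "\<xi> \<in> rays o'" using sp by simp
              have "\<bar>f y \<xi> - f z \<xi>\<bar> \<le> dist w' w" unfolding f_def w' Inl by (rule f_lip_l[OF \<xi>])
              then show "ennreal \<bar>f y \<xi> - f z \<xi>\<bar> \<le> ennreal e" using w'(2) by (intro ennreal_leI) (simp add: dist_commute)
            qed
            also have "\<dots> = ennreal e" using prob_space.emeasure_space_1[OF prob] by simp
            finally show "\<bar>Iprime o' \<mu> \<phi> y - Iprime o' \<mu> \<phi> z\<bar> < \<epsilon>"
              by (rule small[OF yX z \<epsilon>, folded e_def])
          qed
        next
          case (Inr \<eta>)
          have \<eta>: "\<eta> \<in> rays o'" using z Inr unfolding Xbar_def by auto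
          obtain R where R: "\<forall>y\<in>Xbar o'. ereal R < egprod o' y (Inr \<eta>) \<longrightarrow>
             (\<integral>\<^sup>+\<xi>. ennreal \<bar>real_of_ereal (egprod o' (Inr \<xi>) y) - real_of_ereal (egprod o' (Inr \<xi>) (Inr \<eta>))\<bar> \<partial>\<mu> o') \<le> ennreal e"
            using cont_int[OF cat geo PS \<delta> \<eta> e] by blast
          show ?thesis
          proof (rule exI[of _ "{y \<in> Xbar o'. egprod o' y (Inr \<eta>) > ereal R}"], intro conjI ballI)
            show "{y \<in> Xbar o'. egprod o' y (Inr \<eta>) > ereal R} \<in> xbar_basis o'"
              unfolding xbar_basis_def using \<eta> by blast
            show "z \<in> {y \<in> Xbar o'. egprod o' y (Inr \<eta>) > ereal R}" using z Inr egprod_self[OF \<eta>] by simp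
            fix y :: "'a + (real \<Rightarrow> 'a)" assume "y \<in> {y \<in> Xbar o'. egprod o' y (Inr \<eta>) > ereal R}"
            then have y: "y \<in> Xbar o'" "ereal R < egprod o' y (Inr \<eta>)" by auto
            have "(\<integral>\<^sup>+\<xi>. ennreal \<bar>f y \<xi> - f z \<xi>\<bar> \<partial>\<mu> o') \<le> ennreal e"
              using R y unfolding f_def Inr by blast
            then show "\<bar>Iprime o' \<mu> \<phi> y - Iprime o' \<mu> \<phi> z\<bar> < \<epsilon>"
              by (rule small[OF y(1) z \<epsilon>, folded e_def])
          qed
        qed
      qed
    qed
  qed
qed

end
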